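(* In the setting described in the context (left-continuous distortion function $g$), suppose that the processes $M=(M_t)_{t=1}^n$ and $L=(L_t)_{t=1}^n$ have the same law. Then for all $t=1,\dots,n$ and $j=1,\dots,m+1$, $$\mathsf E[\mathbf 1_{t,j}]=\frac{\mathsf E\big[G\,\mathbf 1_{\{G\in[\alpha_{j-1},\alpha_j)\}}\big]}{g(\alpha_j)-g(\alpha_{j-1})},$$ and the random vectors $(\mathbf 1_{t,j})_{j=1,\dots,m+1}$, $t=1,\dots,n$, are independent.
   Context: Let $n\ge1$ and let $L=(L_t)_{t=1}^n$ (true losses) and $M=(M_t)_{t=1}^n$ (model) be real-valued stochastic processes on a probability space $(\Omega,\mathcal F,\mathsf P)$. Assume that for each $t$ the conditional distribution function $F_{M_t\mid M_{t-1},\dots,M_1}(x\mid y_{t-1},\dots,y_1)$ is continuous in $x$. Define the conditional quantile function $q^{t-1}_{M_t}(u)=\inf\{x: F_{M_t\mid M_{t-1},\dots,M_1}(x\mid L_{t-1},\dots,L_1)\ge u\}$, i.e. the quantile of the model's conditional law of $M_t$ evaluated at the observations $M_{t-1}=L_{t-1},\dots,M_1=L_1$. A distortion function is a non-decreasing $g:[0,1]\to[0,1]$ with $g(0)=0$, $g(1)=1$. Let $g$ be a left-continuous distortion function and let $G$ be a $[0,1]$-valued random variable, independent of $L$ and $M$, with $\mathsf P(G<u)=g(u)$ for all $u\in[0,1]$ (equivalently $G=1-\bar G$ where $\bar G$ has distribution function $\bar g(q)=1-g(1-q)$). Let $0=\alpha_0<\alpha_1<\dots<\alpha_m<\alpha_{m+1}=1$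 be a partition with $g(\alpha_j)-g(\alpha_{j-1})\neq0$ for all $j=1,\dots,m+1$. Let $(G_{t,j})_{t=1,\dots,n;\,j=1,\dots,m+1}$ be independent random variables, independent of $(L,M)$, where $G_{t,j}$ has the conditional law of $G$ given $G\in[\alpha_{j-1},\alpha_j)$. The randomized exception indicators are $\mathbf 1_{t,j}=1$ if $L_t>q^{t-1}_{M_t}(1-G_{t,j})$ and $\mathbf 1_{t,j}=0$ otherwise. *)

theory Defs
  imports "HOL-Probability.Probability"
begin

definition hist :: "(nat \<Rightarrow> 'a \<Rightarrow> real) \<Rightarrow> nat \<Rightarrow> 'a \<Rightarrow> nat \<Rightarrow> real" where
  "hist X t \<omega> = (\<lambda>i\<in>{1..<t}. X i \<omega>)"

text \<open>F is (a version of) the conditional distribution function of X_t given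
  (X_{t-1},...,X_1): F x y is, for every history y, a distribution function in x,
  it is measurable in y, and it integrates to the joint law.\<close>
definition cond_cdf ::
  "'a measure \<Rightarrow> (nat \<Rightarrow> 'a \<Rightarrow> real) \<Rightarrow> nat \<Rightarrow> (real \<Rightarrow> (nat \<Rightarrow> real) \<Rightarrow> real) \<Rightarrow> bool" where
  "cond_cdf P X t F \<longleftrightarrow>
     (\<forall>y. mono (\<lambda>x. F x y) \<and> ((\<lambda>x. F x y) \<longlongrightarrow> 0) at_bot \<and> ((\<lambda>x. F x y) \<longlongrightarrow> 1) at_top
          \<and> (\<forall>x. continuous (at_right x) (\<lambda>x. F x y))) \<and>
     (\<forall>x. (\<lambda>y. F x y) \<in> borel_measurable (PiM {1..<t} (\<lambda>_. borel))) \<and>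
     (\<forall>x. \<forall>B\<in>sets (PiM {1..<t} (\<lambda>_. borel)).
        measure P {\<omega>\<in>space P. X t \<omega> \<le> x \<and> hist X t \<omega> \<in> B}
        = (\<integral>\<omega>. indicator B (hist X t \<omega>) * F x (hist X t \<omega>) \<partial>P))"

text \<open>Generalised inverse (quantile) of a distribution function, with values in
  the extended reals (Inf of the empty set is +\<infinity>, of an unbounded set -\<infinity>).\<close>
definition cquantile :: "(real \<Rightarrow> real) \<Rightarrow> real \<Rightarrow> ereal" where
  "cquantile F u = Inf {ereal x | x. F x \<ge> u}"

definition left_cont_distortion :: "(real \<Rightarrow> real) \<Rightarrow> bool" where
  "left_cont_distortion g \<longleftrightarrow> mono_on {0..1} g \<and> g ` {0..1} \<subseteq> {0..1} \<and> g 0 = 0 \<and> g 1 = 1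
     \<and> (\<forall>u\<in>{0<..1}. continuous (at_left u) g)"

text \<open>Randomized exception indicator 1_{t,j}: L_t > q^{t-1}_{M_t}(1 - G_{t,j}), where
  F t is the conditional cdf of M_t given M_{t-1},...,M_1, evaluated at the history of L.\<close>
definition exc_ind ::
  "(nat \<Rightarrow> real \<Rightarrow> (nat \<Rightarrow> real) \<Rightarrow> real) \<Rightarrow> (nat \<Rightarrow> 'a \<Rightarrow> real) \<Rightarrow> (nat \<Rightarrow> nat \<Rightarrow> 'a \<Rightarrow> real)
     \<Rightarrow> nat \<Rightarrow> nat \<Rightarrow> 'a \<Rightarrow> real" where
  "exc_ind F L Gr t j \<omega> =
     (if ereal (L t \<omega>) > cquantile (\<lambda>x. F t x (hist L t \<omega>)) (1 - Gr t j \<omega>) then 1 else 0)"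

end

theory Submission
  imports Defs
begin

definition grd :: "nat \<Rightarrow> real \<Rightarrow> real" where
  "grd i x = real_of_int (max (- int (i*2^i)) (min (int (i*2^i)) \<lceil>x * 2^i\<rceil>)) / 2^i"

lemma grd_range: "grd i x \<in> (\<lambda>z. real_of_int z / 2^i) ` {- int (i*2^i) .. int (i*2^i)}"
  unfolding grd_def by (intro imageI) auto

lemma grd_finite: "finite (range (grd i))"
  by (rule finite_subset[of _ "(\<lambda>z. real_of_int z / 2^i) ` {- int (i*2^i) .. int (i*2^i)}"])
     (use grd_range in auto)

lemma grd_meas[measurable]: "grd i \<in> borel_measurable borel"
  unfolding grd_def by measurable

lemma grd_ev: "eventually (\<lambda>i. x \<le> grd i x \<and> grd i x \<le> x + 1/2^i) sequentially"
proof -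
  obtain N :: nat where N: "\<bar>x\<bar> + 1 \<le> real N" using real_arch_simple by blast
  show ?thesis unfolding eventually_sequentially
  proof (intro exI allI impI)
    fix i assume "N \<le> i"
    then have i: "\<bar>x\<bar> + 1 \<le> real i" using N by linarith
    have p: "(1::real) \<le> 2^i" by simp
    have "real i * 2^i \<ge> (\<bar>x\<bar> + 1) * 2^i" using i by (intro mult_right_mono) auto
    moreover have "x * 2^i \<le> \<bar>x\<bar> * 2^i" by (intro mult_right_mono) auto
    moreover have "- x * 2^i \<le> \<bar>x\<bar> * 2^i" by (intro mult_right_mono) auto
    moreover have "(\<bar>x\<bar> + 1) * 2^i = \<bar>x\<bar> * 2^i + 2^i" by (simp add: algebra_simps)
    moreover have "real_of_int \<lceil>x * 2^i\<rceil> \<le> x * 2^i + 1" "x * 2^i \<le> real_of_int \<lceil>x * 2^i\<rceil>"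
      by linarith+
    ultimately have c1: "real_of_int \<lceil>x * 2^i\<rceil> \<le> real i * 2^i"
        and c2: "- (real i * 2^i) \<le> real_of_int \<lceil>x * 2^i\<rceil>"
      using p by linarith+
    have e: "real_of_int (int (i*2^i)) = real i * 2^i" by simp
    have "real_of_int \<lceil>x * 2^i\<rceil> \<le> real_of_int (int (i*2^i))" using c1 e by linarith
    then have c1': "\<lceil>x * 2^i\<rceil> \<le> int (i*2^i)" by (simp only: of_int_le_iff)
    have "real_of_int (- int (i*2^i)) \<le> real_of_int \<lceil>x * 2^i\<rceil>" using c2 e by simp
    then have c2': "- int (i*2^i) \<le> \<lceil>x * 2^i\<rceil>" by (simp only: of_int_le_iff)
    have g: "grd i x = real_of_int \<lceil>x * 2^i\<rceil> / 2^i"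
      unfolding grd_def using c1' c2' by simp
    have "x * 2^i \<le> real_of_int \<lceil>x * 2^i\<rceil>" "real_of_int \<lceil>x * 2^i\<rceil> \<le> x * 2^i + 1"
      by linarith+
    then show "x \<le> grd i x \<and> grd i x \<le> x + 1/2^i" unfolding g
      by (simp add: field_simps)
  qed
qed

lemma grd_lim: "(\<lambda>i. grd i x) \<longlonglongrightarrow> x"
proof (rule tendsto_sandwich[of "\<lambda>i. x" _ _ "\<lambda>i. x + 1/2^i"])
  show "\<forall>\<^sub>F i in sequentially. x \<le> grd i x" using grd_ev by (rule eventually_mono) auto
  show "\<forall>\<^sub>F i in sequentially. grd i x \<le> x + 1/2^i" using grd_ev by (rule eventually_mono) auto
  show "(\<lambda>i. x) \<longlonglongrightarrow> x" by simp
  have "(\<lambda>i. (1/2::real)^i) \<longlonglongrightarrow> 0" using LIMSEQ_power_zero[of "1/2::real"] by simp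
  then have "(\<lambda>i. x + (1/2::real)^i) \<longlonglongrightarrow> x + 0" by (rule tendsto_add[OF tendsto_const])
  then show "(\<lambda>i. x + 1/2^i) \<longlonglongrightarrow> x" by (simp only: power_one_over add_0_right)
qed

lemma caratheodory_meas:
  fixes F :: "real \<Rightarrow> 'b \<Rightarrow> real"
  assumes Fm: "\<And>x. F x \<in> borel_measurable N"
    and Fc: "\<And>y. continuous_on UNIV (\<lambda>x. F x y)"
    and g: "g \<in> borel_measurable M" and k: "k \<in> measurable M N"
  shows "(\<lambda>\<omega>. F (g \<omega>) (k \<omega>)) \<in> borel_measurable M"
proof (rule borel_measurable_LIMSEQ_real[where u="\<lambda>i \<omega>. F (grd i (g \<omega>)) (k \<omega>)"])
  fix \<omega>
  have "isCont (\<lambda>x. F x (k \<omega>)) (g \<omega>)"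
    using Fc[of "k \<omega>"] continuous_on_eq_continuous_at[OF open_UNIV] by fast
  then show "(\<lambda>i. F (grd i (g \<omega>)) (k \<omega>)) \<longlonglongrightarrow> F (g \<omega>) (k \<omega>)"
    by (rule isCont_tendsto_compose[OF _ grd_lim])
next
  fix i
  have eq: "(\<lambda>\<omega>. F (grd i (g \<omega>)) (k \<omega>)) =
      (\<lambda>\<omega>. \<Sum>v\<in>range (grd i). indicator {\<omega>. grd i (g \<omega>) = v} \<omega> * F v (k \<omega>))"
  proof
    fix \<omega>
    have "(\<Sum>v\<in>range (grd i). indicator {\<omega>. grd i (g \<omega>) = v} \<omega> * F v (k \<omega>))
        = (\<Sum>v\<in>{grd i (g \<omega>)}. indicator {\<omega>. grd i (g \<omega>) = v} \<omega> * F v (k \<omega>))"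
      by (rule sum.mono_neutral_right) (auto simp: grd_finite)
    then show "F (grd i (g \<omega>)) (k \<omega>) = (\<Sum>v\<in>range (grd i). indicator {\<omega>. grd i (g \<omega>) = v} \<omega> * F v (k \<omega>))"
      by simp
  qed
  have gi: "(\<lambda>\<omega>. grd i (g \<omega>)) \<in> borel_measurable M"
    using measurable_compose[OF g grd_meas] .
  have ind: "\<And>v. (\<lambda>\<omega>. indicator {\<omega>. grd i (g \<omega>) = v} \<omega> :: real) \<in> borel_measurable M"
  proof -
    fix v
    have "(\<lambda>\<omega>. indicator {\<omega>. grd i (g \<omega>) = v} \<omega> :: real) = indicator (((\<lambda>\<omega>. grd i (g \<omega>)) -` {v}))"
      by (auto simp: indicator_def)
    also have "\<dots> = (\<lambda>\<omega>. indicator {v} (grd i (g \<omega>)))" by (auto simp: indicator_def)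
    finally show "(\<lambda>\<omega>. indicator {\<omega>. grd i (g \<omega>) = v} \<omega> :: real) \<in> borel_measurable M"
      using measurable_compose[OF gi borel_measurable_indicator[of "{v}" borel]] by simp
  qed
  have fk: "\<And>v. (\<lambda>\<omega>. F v (k \<omega>)) \<in> borel_measurable M"
    using Fm k by (rule measurable_compose[rotated])
  show "(\<lambda>\<omega>. F (grd i (g \<omega>)) (k \<omega>)) \<in> borel_measurable M"
  proof -
    have "\<And>v. (\<lambda>\<omega>. indicator {\<omega>. grd i (g \<omega>) = v} \<omega> * F v (k \<omega>)) \<in> borel_measurable M"
      using borel_measurable_times[OF ind fk] .
    then have "(\<lambda>\<omega>. \<Sum>v\<in>range (grd i). indicator {\<omega>. grd i (g \<omega>) = v} \<omega> * F v (k \<omega>)) \<in> borel_measurable M"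
      by (simp only: borel_measurable_sum)
    then show ?thesis unfolding eq .
  qed
qed

lemma threshold:
  fixes X :: "'a \<Rightarrow> real" and Y :: "'a \<Rightarrow> 'b" and F :: "real \<Rightarrow> 'b \<Rightarrow> real"
  assumes P: "prob_space P"
   and X[measurable]: "X \<in> borel_measurable P" and Y[measurable]: "Y \<in> measurable P N"
   and Fm: "\<And>x. F x \<in> borel_measurable N"
   and Fc: "\<And>y. continuous_on UNIV (\<lambda>x. F x y)"
   and F01: "\<And>x y. 0 \<le> F x y \<and> F x y \<le> 1"
   and cd: "\<And>x B. B \<in> sets N \<Longrightarrow> measure P {\<omega>\<in>space P. X \<omega> \<le> x \<and> Y \<omega> \<in> B}
              = (\<integral>\<omega>. indicator B (Y \<omega>) * F x (Y \<omega>) \<partial>P)"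
   and h[measurable]: "h \<in> borel_measurable N" and B[measurable]: "B \<in> sets N"
  shows "measure P {\<omega>\<in>space P. X \<omega> \<le> h (Y \<omega>) \<and> Y \<omega> \<in> B}
       = (\<integral>\<omega>. indicator B (Y \<omega>) * F (h (Y \<omega>)) (Y \<omega>) \<partial>P)"
proof -
  interpret prob_space P by (rule P)
  define S where "S i = {\<omega>\<in>space P. X \<omega> \<le> grd i (h (Y \<omega>)) \<and> Y \<omega> \<in> B}" for i
  define S' where "S' = {\<omega>\<in>space P. X \<omega> \<le> h (Y \<omega>) \<and> Y \<omega> \<in> B}"
  have S[measurable]: "S i \<in> sets P" for i unfolding S_def by measurable
  have S'[measurable]: "S' \<in> sets P" unfolding S'_def by measurable
  have FhY: "(\<lambda>\<omega>. F (g \<omega>) (Y \<omega>)) \<in> borel_measurable P" if "g \<in> borel_measurable P" for g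
    by (rule caratheodory_meas[OF Fm Fc that Y])
  have bndF: "integrable P (\<lambda>\<omega>. indicator A (Y \<omega>) * F (g \<omega>) (Y \<omega>))"
    if "g \<in> borel_measurable P" "A \<in> sets N" for g A
  proof (rule integrable_const_bound[where B=1])
    show "AE x in P. norm (indicator A (Y x) * F (g x) (Y x)) \<le> (1::real)"
      using F01 by (auto simp: indicator_def)
    have "(\<lambda>\<omega>. indicator A (Y \<omega>) :: real) \<in> borel_measurable P" using that(2) by measurable
    then show "(\<lambda>\<omega>. indicator A (Y \<omega>) * F (g \<omega>) (Y \<omega>)) \<in> borel_measurable P"
      using FhY[OF that(1)] by (rule borel_measurable_times)
  qed
  have step: "measure P (S i) = (\<integral>\<omega>. indicator B (Y \<omega>) * F (grd i (h (Y \<omega>))) (Y \<omega>) \<partial>P)" for i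
  proof -
    define R where "R = range (grd i)"
    have R: "finite R" unfolding R_def by (rule grd_finite)
    define T where "T v = {\<omega>\<in>space P. X \<omega> \<le> v \<and> Y \<omega> \<in> B \<inter> {y\<in>space N. grd i (h y) = v}}" for v
    have Bv[measurable]: "B \<inter> {y\<in>space N. grd i (h y) = v} \<in> sets N" for v by measurable
    have T[measurable]: "T v \<in> sets P" for v unfolding T_def by measurable
    have ind: "indicator (S i) \<omega> = (\<Sum>v\<in>R. indicator (T v) \<omega> :: real)" for \<omega>
    proof (cases "\<omega> \<in> space P")
      case True
      then have "Y \<omega> \<in> space N" by (rule measurable_space[OF Y])
      have "(\<Sum>v\<in>R. indicator (T v) \<omega> :: real) = (\<Sum>v\<in>{grd i (h (Y \<omega>))}. indicator (T v) \<omega>)"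
        by (rule sum.mono_neutral_right) (auto simp: grd_finite T_def R_def indicator_def)
      then show ?thesis using True \<open>Y \<omega> \<in> space N\<close> by (auto simp: S_def T_def indicator_def)
    next
      case False
      then show ?thesis by (simp add: S_def T_def)
    qed
    have "measure P (S i) = (\<integral>\<omega>. indicator (S i) \<omega> \<partial>P)"
      using S[of i] by (simp add: integral_indicator Int_absorb2 sets.sets_into_space)
    also have "\<dots> = (\<integral>\<omega>. (\<Sum>v\<in>R. indicator (T v) \<omega>) \<partial>P)" by (simp add: ind)
    also have "\<dots> = (\<Sum>v\<in>R. (\<integral>\<omega>. indicator (T v) \<omega> \<partial>P))"
      by (rule Bochner_Integration.integral_sum[where I=R and M=P and f="\<lambda>v \<omega>. indicator (T v) \<omega>"]) (auto intro!: integrable_real_indicator simp: emeasure_eq_measure)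
    also have "\<dots> = (\<Sum>v\<in>R. measure P (T v))"
      by (intro sum.cong refl) (simp add: integral_indicator Int_absorb2 sets.sets_into_space)
    also have "\<dots> = (\<Sum>v\<in>R. (\<integral>\<omega>. indicator (B \<inter> {y\<in>space N. grd i (h y) = v}) (Y \<omega>) * F v (Y \<omega>) \<partial>P))"
      unfolding T_def by (intro sum.cong refl cd Bv)
    also have "\<dots> = (\<integral>\<omega>. (\<Sum>v\<in>R. indicator (B \<inter> {y\<in>space N. grd i (h y) = v}) (Y \<omega>) * F v (Y \<omega>)) \<partial>P)"
      by (rule Bochner_Integration.integral_sum[symmetric]) (rule bndF, auto)
    also have "\<dots> = (\<integral>\<omega>. indicator B (Y \<omega>) * F (grd i (h (Y \<omega>))) (Y \<omega>) \<partial>P)"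
    proof (rule Bochner_Integration.integral_cong[OF refl])
      fix \<omega> assume "\<omega> \<in> space P"
      then have "Y \<omega> \<in> space N" by (rule measurable_space[OF Y])
      have "(\<Sum>v\<in>R. indicator (B \<inter> {y\<in>space N. grd i (h y) = v}) (Y \<omega>) * F v (Y \<omega>))
          = (\<Sum>v\<in>{grd i (h (Y \<omega>))}. indicator (B \<inter> {y\<in>space N. grd i (h y) = v}) (Y \<omega>) * F v (Y \<omega>))"
        by (rule sum.mono_neutral_right) (auto simp: grd_finite R_def indicator_def)
      then show "(\<Sum>v\<in>R. indicator (B \<inter> {y\<in>space N. grd i (h y) = v}) (Y \<omega>) * F v (Y \<omega>))
          = indicator B (Y \<omega>) * F (grd i (h (Y \<omega>))) (Y \<omega>)"
        using \<open>Y \<omega> \<in> space N\<close> by (simp add: indicator_def)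
    qed
    finally show ?thesis .
  qed
  have lim1: "(\<lambda>i. measure P (S i)) \<longlonglongrightarrow> measure P S'"
  proof -
    have "(\<lambda>i. (\<integral>\<omega>. indicator (S i) \<omega> \<partial>P)) \<longlonglongrightarrow> (\<integral>\<omega>. indicator S' \<omega> \<partial>P :: real)"
    proof (rule Bochner_Integration.integral_dominated_convergence[where w="\<lambda>_. 1::real" and s="\<lambda>i. indicator (S i)" and f="indicator S'"])
      show "AE x in P. (\<lambda>i. indicator (S i) x :: real) \<longlonglongrightarrow> indicator S' x"
      proof (rule AE_I2)
        fix \<omega> assume w: "\<omega> \<in> space P"
        show "(\<lambda>i. indicator (S i) \<omega> :: real) \<longlonglongrightarrow> indicator S' \<omega>"
        proof (cases "X \<omega> \<le> h (Y \<omega>) \<and> Y \<omega> \<in> B")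
          case True
          have "eventually (\<lambda>i. indicator (S i) \<omega> = (indicator S' \<omega> :: real)) sequentially"
            using grd_ev[of "h (Y \<omega>)"] by eventually_elim (use True w in \<open>auto simp: S_def S'_def\<close>)
          then show ?thesis by (rule tendsto_eventually)
        next
          case False
          show ?thesis
          proof (cases "Y \<omega> \<in> B")
            case False
            then show ?thesis by (simp add: S_def S'_def)
          next
            case True
            with False have lt: "h (Y \<omega>) < X \<omega>" by auto
            have "eventually (\<lambda>i. grd i (h (Y \<omega>)) < X \<omega>) sequentially"
              using grd_lim[of "h (Y \<omega>)"] lt by (rule order_tendstoD)
            then have "eventually (\<lambda>i. indicator (S i) \<omega> = (indicator S' \<omega> :: real)) sequentially"
              by eventually_elim (use lt in \<open>auto simp: S_def S'_def\<close>)
            then show ?thesis by (rule tendsto_eventually)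
          qed
        qed
      qed
      show "indicator S' \<in> borel_measurable P" using S' by (rule borel_measurable_indicator)
      show "indicator (S i) \<in> borel_measurable P" for i using S by (rule borel_measurable_indicator)
      show "integrable P (\<lambda>_. 1::real)" by simp
      show "AE x in P. norm (indicator (S i) x :: real) \<le> 1" for i by (simp add: indicator_def)
    qed
    then show ?thesis
      using S S' by (simp add: integral_indicator Int_absorb2 sets.sets_into_space)
  qed
  have lim2: "(\<lambda>i. (\<integral>\<omega>. indicator B (Y \<omega>) * F (grd i (h (Y \<omega>))) (Y \<omega>) \<partial>P))
      \<longlonglongrightarrow> (\<integral>\<omega>. indicator B (Y \<omega>) * F (h (Y \<omega>)) (Y \<omega>) \<partial>P)"
  proof (rule Bochner_Integration.integral_dominated_convergence[where w="\<lambda>_. 1"])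
    show "(\<lambda>\<omega>. indicator B (Y \<omega>) * F (h (Y \<omega>)) (Y \<omega>)) \<in> borel_measurable P"
      using bndF[of "\<lambda>\<omega>. h (Y \<omega>)" B] by auto
    show "(\<lambda>\<omega>. indicator B (Y \<omega>) * F (grd i (h (Y \<omega>))) (Y \<omega>)) \<in> borel_measurable P" for i
      using bndF[of "\<lambda>\<omega>. grd i (h (Y \<omega>))" B] by auto
    show "AE x in P. (\<lambda>i. indicator B (Y x) * F (grd i (h (Y x))) (Y x)) \<longlonglongrightarrow> indicator B (Y x) * F (h (Y x)) (Y x)"
    proof (rule AE_I2)
      fix \<omega>
      have "isCont (\<lambda>x. F x (Y \<omega>)) (h (Y \<omega>))"
        using Fc[of "Y \<omega>"] continuous_on_eq_continuous_at[OF open_UNIV] by fast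
      then have "(\<lambda>i. F (grd i (h (Y \<omega>))) (Y \<omega>)) \<longlonglongrightarrow> F (h (Y \<omega>)) (Y \<omega>)"
        by (rule isCont_tendsto_compose[OF _ grd_lim])
      then show "(\<lambda>i. indicator B (Y \<omega>) * F (grd i (h (Y \<omega>))) (Y \<omega>)) \<longlonglongrightarrow> indicator B (Y \<omega>) * F (h (Y \<omega>)) (Y \<omega>)"
        by (rule tendsto_mult[OF tendsto_const])
    qed
    show "AE x in P. norm (indicator B (Y x) * F (grd i (h (Y x))) (Y x)) \<le> (1::real)" for i
      using F01 by (auto simp: indicator_def)
    show "integrable P (\<lambda>_. 1::real)" by simp
  qed
  have "(\<lambda>i. measure P (S i)) \<longlonglongrightarrow> (\<integral>\<omega>. indicator B (Y \<omega>) * F (h (Y \<omega>)) (Y \<omega>) \<partial>P)"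
    using lim2 by (simp only: step)
  from LIMSEQ_unique[OF lim1 this] show ?thesis unfolding S'_def .
qed

lemma cdf01:
  fixes f :: "real \<Rightarrow> real"
  assumes m: "mono f" and l0: "(f \<longlongrightarrow> 0) at_bot" and l1: "(f \<longlongrightarrow> 1) at_top"
  shows "0 \<le> f x \<and> f x \<le> 1"
proof
  show "0 \<le> f x"
  proof (rule ccontr)
    assume "\<not> 0 \<le> f x"
    then have "f x < 0" by simp
    from order_tendstoD(1)[OF l0 this] obtain N where N: "\<And>z. z \<le> N \<Longrightarrow> f x < f z"
      unfolding eventually_at_bot_linorder by blast
    have "f (min N x) \<le> f x" using m by (rule monoD) simp
    moreover have "f x < f (min N x)" by (rule N) simp
    ultimately show False by simp
  qed
  show "f x \<le> 1"
  proof (rule ccontr)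
    assume "\<not> f x \<le> 1"
    then have "1 < f x" by simp
    from order_tendstoD(2)[OF l1 this] obtain N where N: "\<And>z. z \<ge> N \<Longrightarrow> f z < f x"
      unfolding eventually_at_top_linorder by blast
    have "f x \<le> f (max N x)" using m by (rule monoD) simp
    moreover have "f (max N x) < f x" by (rule N) simp
    ultimately show False by simp
  qed
qed

lemma pit:
  fixes X :: "'a \<Rightarrow> real" and Y :: "'a \<Rightarrow> 'b" and F :: "real \<Rightarrow> 'b \<Rightarrow> real"
  assumes P: "prob_space P"
   and X[measurable]: "X \<in> borel_measurable P" and Y[measurable]: "Y \<in> measurable P N"
   and Fm: "\<And>x. F x \<in> borel_measurable N"
   and Fc: "\<And>y. continuous_on UNIV (\<lambda>x. F x y)"
   and Fmono: "\<And>y. mono (\<lambda>x. F x y)"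
   and F0: "\<And>y. ((\<lambda>x. F x y) \<longlongrightarrow> 0) at_bot"
   and F1: "\<And>y. ((\<lambda>x. F x y) \<longlongrightarrow> 1) at_top"
   and cd: "\<And>x B. B \<in> sets N \<Longrightarrow> measure P {\<omega>\<in>space P. X \<omega> \<le> x \<and> Y \<omega> \<in> B}
              = (\<integral>\<omega>. indicator B (Y \<omega>) * F x (Y \<omega>) \<partial>P)"
   and u: "0 < u" "u < 1" and B[measurable]: "B \<in> sets N"
  shows "measure P {\<omega>\<in>space P. F (X \<omega>) (Y \<omega>) \<le> u \<and> Y \<omega> \<in> B}
       = u * measure P {\<omega>\<in>space P. Y \<omega> \<in> B}"
proof -
  interpret prob_space P by (rule P)
  have F01: "\<And>x y. 0 \<le> F x y \<and> F x y \<le> 1"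
    using cdf01[OF Fmono F0 F1] by blast
  define xu where "xu y = Sup {x. F x y \<le> u}" for y
  have key: "F x y \<le> u \<longleftrightarrow> x \<le> xu y" for x y
  proof -
    let ?S = "{x. F x y \<le> u}"
    from order_tendstoD(2)[OF F0[of y] u(1)] obtain N0 where N0: "\<And>z. z \<le> N0 \<Longrightarrow> F z y < u"
      unfolding eventually_at_bot_linorder by blast
    from order_tendstoD(1)[OF F1[of y] u(2)] obtain N1 where N1: "\<And>z. z \<ge> N1 \<Longrightarrow> u < F z y"
      unfolding eventually_at_top_linorder by blast
    have ne: "?S \<noteq> {}" using N0[of N0] less_imp_le by auto
    have bdd: "bdd_above ?S"
    proof (rule bdd_aboveI)
      fix z assume "z \<in> ?S"
      then show "z \<le> N1" using N1[of z] by force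
    qed
    have cl: "closed ?S"
      using closed_Collect_le[OF Fc[of y] continuous_on_const] .
    have inS: "xu y \<in> ?S" unfolding xu_def by (rule closed_contains_Sup[OF ne bdd cl])
    show ?thesis
    proof
      assume "F x y \<le> u" then show "x \<le> xu y" unfolding xu_def by (intro cSup_upper bdd) auto
    next
      assume "x \<le> xu y"
      then have "F x y \<le> F (xu y) y" using Fmono[of y] by (simp add: mono_def)
      then show "F x y \<le> u" using inS by simp
    qed
  qed
  have Fxu: "F (xu y) y = u" for y
  proof -
    from order_tendstoD(1)[OF F1[of y] u(2)] obtain N1 where N1: "\<And>z. z \<ge> N1 \<Longrightarrow> u < F z y"
      unfolding eventually_at_top_linorder by blast
    let ?b = "max N1 (xu y)"
    have a: "F (xu y) y \<le> u" using key by simp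
    have b: "u \<le> F ?b y" using N1[of ?b] by simp
    have "continuous_on {xu y..?b} (\<lambda>x. F x y)"
      using Fc[of y] by (rule continuous_on_subset) simp
    from IVT'[of "\<lambda>x. F x y", OF a b _ this] obtain z where z: "xu y \<le> z" "F z y = u" by auto
    then have "z \<le> xu y" using key[of z y] by simp
    with z show ?thesis by simp
  qed
  have xum[measurable]: "xu \<in> borel_measurable N"
    unfolding borel_measurable_iff_less
  proof
    fix c
    have "{w \<in> space N. xu w < c} = {w \<in> space N. u < F c w}"
      using key by (auto simp: not_le[symmetric])
    also have "\<dots> \<in> sets N" using Fm[of c] by measurable
    finally show "{w \<in> space N. xu w < c} \<in> sets N" .
  qed
  have "measure P {\<omega>\<in>space P. F (X \<omega>) (Y \<omega>) \<le> u \<and> Y \<omega> \<in> B}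
      = measure P {\<omega>\<in>space P. X \<omega> \<le> xu (Y \<omega>) \<and> Y \<omega> \<in> B}"
    using key by simp
  also have "\<dots> = (\<integral>\<omega>. indicator B (Y \<omega>) * F (xu (Y \<omega>)) (Y \<omega>) \<partial>P)"
    by (rule threshold[OF P X Y Fm Fc F01 cd xum B])
  also have "\<dots> = (\<integral>\<omega>. u * indicator B (Y \<omega>) \<partial>P)"
    by (simp add: Fxu mult.commute)
  also have "\<dots> = u * (\<integral>\<omega>. indicator B (Y \<omega>) \<partial>P)" by simp
  also have "(\<integral>\<omega>. indicator B (Y \<omega>) \<partial>P) = measure P {\<omega>\<in>space P. Y \<omega> \<in> B}"
  proof -
    have "(\<integral>\<omega>. indicator B (Y \<omega>) \<partial>P) = (\<integral>\<omega>. indicator {\<omega>\<in>space P. Y \<omega> \<in> B} \<omega> \<partial>P)"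
      by (rule Bochner_Integration.integral_cong) (auto simp: indicator_def)
    also have "\<dots> = measure P {\<omega>\<in>space P. Y \<omega> \<in> B}"
      by (simp add: integral_indicator Int_absorb2)
    finally show ?thesis .
  qed
  finally show ?thesis .
qed

lemma pit_all:
  fixes X :: "'a \<Rightarrow> real" and Y :: "'a \<Rightarrow> 'b" and F :: "real \<Rightarrow> 'b \<Rightarrow> real"
  assumes P: "prob_space P"
   and X[measurable]: "X \<in> borel_measurable P" and Y[measurable]: "Y \<in> measurable P N"
   and Fm: "\<And>x. F x \<in> borel_measurable N"
   and Fc: "\<And>y. continuous_on UNIV (\<lambda>x. F x y)"
   and Fmono: "\<And>y. mono (\<lambda>x. F x y)"
   and F0: "\<And>y. ((\<lambda>x. F x y) \<longlongrightarrow> 0) at_bot"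
   and F1: "\<And>y. ((\<lambda>x. F x y) \<longlongrightarrow> 1) at_top"
   and cd: "\<And>x B. B \<in> sets N \<Longrightarrow> measure P {\<omega>\<in>space P. X \<omega> \<le> x \<and> Y \<omega> \<in> B}
              = (\<integral>\<omega>. indicator B (Y \<omega>) * F x (Y \<omega>) \<partial>P)"
   and B[measurable]: "B \<in> sets N"
  shows "measure P {\<omega>\<in>space P. F (X \<omega>) (Y \<omega>) \<le> c \<and> Y \<omega> \<in> B}
       = max 0 (min 1 c) * measure P {\<omega>\<in>space P. Y \<omega> \<in> B}"
proof -
  interpret prob_space P by (rule P)
  have F01: "\<And>x y. 0 \<le> F x y \<and> F x y \<le> 1"
    using cdf01[OF Fmono F0 F1] by blast
  have Um[measurable]: "(\<lambda>\<omega>. F (X \<omega>) (Y \<omega>)) \<in> borel_measurable P"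
    by (rule caratheodory_meas[OF Fm Fc X Y])
  have pit': "measure P {\<omega>\<in>space P. F (X \<omega>) (Y \<omega>) \<le> u \<and> Y \<omega> \<in> B'}
       = u * measure P {\<omega>\<in>space P. Y \<omega> \<in> B'}" if "0 < u" "u < 1" "B' \<in> sets N" for u B'
    using pit[of P X Y N F u B'] assms that by blast
  consider "c < 0" | "c = 0" | "0 < c \<and> c < 1" | "1 \<le> c" by linarith
  then show ?thesis
  proof cases
    case 1
    then have "{\<omega>\<in>space P. F (X \<omega>) (Y \<omega>) \<le> c \<and> Y \<omega> \<in> B} = {}"
      using F01 by (smt (verit) Collect_empty_eq)
    then show ?thesis using 1 by (simp only:) simp
  next
    case 2
    have "measure P {\<omega>\<in>space P. F (X \<omega>) (Y \<omega>) \<le> 0 \<and> Y \<omega> \<in> B} \<le> e" if e: "0 < e" "e < 1" for e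
    proof -
      have "measure P {\<omega>\<in>space P. F (X \<omega>) (Y \<omega>) \<le> 0 \<and> Y \<omega> \<in> B}
          \<le> measure P {\<omega>\<in>space P. F (X \<omega>) (Y \<omega>) \<le> e \<and> Y \<omega> \<in> B}"
        using e by (intro finite_measure_mono) auto
      also have "\<dots> = e * measure P {\<omega>\<in>space P. Y \<omega> \<in> B}" by (rule pit'[OF e B])
      also have "\<dots> \<le> e * 1" using e by (intro mult_left_mono) auto
      finally show ?thesis by simp
    qed
    then have "measure P {\<omega>\<in>space P. F (X \<omega>) (Y \<omega>) \<le> 0 \<and> Y \<omega> \<in> B} \<le> 0"
    proof -
      let ?m = "measure P {\<omega>\<in>space P. F (X \<omega>) (Y \<omega>) \<le> 0 \<and> Y \<omega> \<in> B}"
      assume h: "\<And>e. 0 < e \<Longrightarrow> e < 1 \<Longrightarrow> ?m \<le> e"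
      show "?m \<le> 0"
      proof (rule ccontr)
        assume "\<not> ?m \<le> 0"
        then have "0 < min (?m/2) (1/2)" by simp
        from h[OF this] \<open>\<not> ?m \<le> 0\<close> prob_le_1[of "{\<omega>\<in>space P. F (X \<omega>) (Y \<omega>) \<le> 0 \<and> Y \<omega> \<in> B}"]
        show False by (simp add: min_def split: if_splits)
      qed
    qed
    then show ?thesis using 2 by (simp add: measure_nonneg order_antisym)
  next
    case 3
    then show ?thesis using pit'[of c B] by simp
  next
    case 4
    have "{\<omega>\<in>space P. F (X \<omega>) (Y \<omega>) \<le> c \<and> Y \<omega> \<in> B} = {\<omega>\<in>space P. Y \<omega> \<in> B}"
      using F01 4 by (auto intro: order_trans)
    then show ?thesis using 4 by simp
  qed
qed

locale setting =
  fixes P :: "'a measure"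
    and L M :: "nat \<Rightarrow> 'a \<Rightarrow> real"
    and F :: "nat \<Rightarrow> real \<Rightarrow> (nat \<Rightarrow> real) \<Rightarrow> real"
    and n :: nat
  assumes P: "prob_space P"
    and L_rv: "\<And>t. t \<in> {1..n} \<Longrightarrow> L t \<in> borel_measurable P"
    and M_rv: "\<And>t. t \<in> {1..n} \<Longrightarrow> M t \<in> borel_measurable P"
    and F_cond: "\<And>t. t \<in> {1..n} \<Longrightarrow> cond_cdf P M t (F t)"
    and F_cont: "\<And>t y. t \<in> {1..n} \<Longrightarrow> continuous_on UNIV (\<lambda>x. F t x y)"
    and same_law: "distr P (PiM {1..n} (\<lambda>_. borel)) (\<lambda>\<omega>. \<lambda>i\<in>{1..n}. M i \<omega>)
                 = distr P (PiM {1..n} (\<lambda>_. borel)) (\<lambda>\<omega>. \<lambda>i\<in>{1..n}. L i \<omega>)"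
begin

abbreviation "N t \<equiv> PiM {1..<t} (\<lambda>_::nat. (borel :: real measure))"

lemma prob: "prob_space P" by (rule P)

lemma hist_meas:
  assumes "t \<in> {1..n}" "\<And>i. i \<in> {1..n} \<Longrightarrow> X i \<in> borel_measurable P"
  shows "hist X t \<in> measurable P (N t)"
  unfolding hist_def using assms by (intro measurable_restrict) auto

lemma hist_L[measurable]: "t \<in> {1..n} \<Longrightarrow> hist L t \<in> measurable P (N t)"
  using hist_meas L_rv by blast

lemma cond_L:
  assumes t: "t \<in> {1..n}" and B: "B \<in> sets (N t)"
  shows "measure P {\<omega>\<in>space P. L t \<omega> \<le> x \<and> hist L t \<omega> \<in> B}
        = (\<integral>\<omega>. indicator B (hist L t \<omega>) * F t x (hist L t \<omega>) \<partial>P)"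
proof -
  let ?Pi = "PiM {1..n} (\<lambda>_::nat. (borel :: real measure))"
  have VL: "(\<lambda>\<omega>. \<lambda>i\<in>{1..n}. L i \<omega>) \<in> measurable P ?Pi"
    using L_rv by (intro measurable_restrict) auto
  have VM: "(\<lambda>\<omega>. \<lambda>i\<in>{1..n}. M i \<omega>) \<in> measurable P ?Pi"
    using M_rv by (intro measurable_restrict) auto
  have sub: "{1..<t} \<subseteq> {1..n}" using t by auto
  have rs: "(\<lambda>v. restrict v {1..<t}) \<in> measurable ?Pi (N t)"
    by (rule measurable_restrict_subset[OF sub])
  have comp: "(\<lambda>v::nat\<Rightarrow>real. v t) \<in> borel_measurable ?Pi"
    using t by (intro measurable_component_singleton) auto
  define Q where "Q = {v\<in>space ?Pi. v t \<le> x \<and> restrict v {1..<t} \<in> B}"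
  have Q: "Q \<in> sets ?Pi"
  proof -
    have "{v\<in>space ?Pi. v t \<le> x} \<in> sets ?Pi" using comp by measurable
    moreover have "{v\<in>space ?Pi. restrict v {1..<t} \<in> B} \<in> sets ?Pi"
      using measurable_sets[OF rs B] by (simp add: vimage_def Int_def conj_commute)
    ultimately have "{v\<in>space ?Pi. v t \<le> x} \<inter> {v\<in>space ?Pi. restrict v {1..<t} \<in> B} \<in> sets ?Pi" by auto
    then show ?thesis unfolding Q_def by (simp add: Collect_conj_eq[symmetric] Int_def) (metis (no_types, lifting) Collect_cong)
  qed
  define f where "f v = indicator B (restrict v {1..<t}) * F t x (restrict v {1..<t})" for v :: "nat \<Rightarrow> real"
  have Fx: "F t x \<in> borel_measurable (N t)" using F_cond[OF t] unfolding cond_cdf_def by blast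
  have f: "f \<in> borel_measurable ?Pi"
    unfolding f_def
    by (intro borel_measurable_times measurable_compose[OF rs Fx] measurable_compose[OF rs borel_measurable_indicator[OF B]])
  have hX: "restrict (\<lambda>i\<in>{1..n}. X i \<omega>) {1..<t} = hist X t \<omega>" for X :: "nat \<Rightarrow> 'a \<Rightarrow> real" and \<omega>
    using sub t by (auto simp: hist_def restrict_def fun_eq_iff)
  have setX: "(\<lambda>\<omega>. \<lambda>i\<in>{1..n}. X i \<omega>) -` Q \<inter> space P = {\<omega>\<in>space P. X t \<omega> \<le> x \<and> hist X t \<omega> \<in> B}"
    if "(\<lambda>\<omega>. \<lambda>i\<in>{1..n}. X i \<omega>) \<in> measurable P ?Pi" for X :: "nat \<Rightarrow> 'a \<Rightarrow> real"
    using measurable_space[OF that] t unfolding Q_def by (auto simp: hX[symmetric])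
  have "measure P {\<omega>\<in>space P. L t \<omega> \<le> x \<and> hist L t \<omega> \<in> B}
      = measure (distr P ?Pi (\<lambda>\<omega>. \<lambda>i\<in>{1..n}. L i \<omega>)) Q"
    by (simp only: measure_distr[OF VL Q] setX[OF VL])
  also have "\<dots> = measure (distr P ?Pi (\<lambda>\<omega>. \<lambda>i\<in>{1..n}. M i \<omega>)) Q" by (simp only: same_law)
  also have "\<dots> = measure P {\<omega>\<in>space P. M t \<omega> \<le> x \<and> hist M t \<omega> \<in> B}"
    by (simp only: measure_distr[OF VM Q] setX[OF VM])
  also have "\<dots> = (\<integral>\<omega>. indicator B (hist M t \<omega>) * F t x (hist M t \<omega>) \<partial>P)"
    using F_cond[OF t] B unfolding cond_cdf_def by blast
  also have "\<dots> = (\<integral>v. f v \<partial>distr P ?Pi (\<lambda>\<omega>. \<lambda>i\<in>{1..n}. M i \<omega>))"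
    by (subst integral_distr[OF VM f]) (simp only: f_def hX)
  also have "\<dots> = (\<integral>v. f v \<partial>distr P ?Pi (\<lambda>\<omega>. \<lambda>i\<in>{1..n}. L i \<omega>))" by (simp only: same_law)
  also have "\<dots> = (\<integral>\<omega>. indicator B (hist L t \<omega>) * F t x (hist L t \<omega>) \<partial>P)"
    by (subst integral_distr[OF VL f]) (simp only: f_def hX)
  finally show ?thesis .
qed

definition "U t \<omega> = F t (L t \<omega>) (hist L t \<omega>)"

lemma Fm: "t \<in> {1..n} \<Longrightarrow> F t x \<in> borel_measurable (N t)"
  using F_cond unfolding cond_cdf_def by blast
lemma Fmono: "t \<in> {1..n} \<Longrightarrow> mono (\<lambda>x. F t x y)"
  using F_cond unfolding cond_cdf_def by blast
lemma F0: "t \<in> {1..n} \<Longrightarrow> ((\<lambda>x. F t x y) \<longlongrightarrow> 0) at_bot"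
  using F_cond unfolding cond_cdf_def by blast
lemma F1: "t \<in> {1..n} \<Longrightarrow> ((\<lambda>x. F t x y) \<longlongrightarrow> 1) at_top"
  using F_cond unfolding cond_cdf_def by blast
lemma F01: "t \<in> {1..n} \<Longrightarrow> 0 \<le> F t x y \<and> F t x y \<le> 1"
  using cdf01[OF Fmono F0 F1] by blast

lemma U_meas[measurable]: "t \<in> {1..n} \<Longrightarrow> U t \<in> borel_measurable P"
  unfolding U_def by (rule caratheodory_meas[OF Fm F_cont L_rv hist_L])

lemma U01: "t \<in> {1..n} \<Longrightarrow> 0 \<le> U t \<omega> \<and> U t \<omega> \<le> 1"
  unfolding U_def by (rule F01)

lemma pitU:
  assumes t: "t \<in> {1..n}" and B: "B \<in> sets (N t)"
  shows "measure P {\<omega>\<in>space P. U t \<omega> \<le> c \<and> hist L t \<omega> \<in> B}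
       = max 0 (min 1 c) * measure P {\<omega>\<in>space P. hist L t \<omega> \<in> B}"
  unfolding U_def
  by (rule pit_all[OF P L_rv[OF t] hist_L[OF t] Fm[OF t] F_cont[OF t] Fmono[OF t] F0[OF t] F1[OF t] cond_L[OF t] B])

lemma margU:
  assumes t: "t \<in> {1..n}"
  shows "measure P {\<omega>\<in>space P. U t \<omega> \<le> c} = max 0 (min 1 c)"
proof -
  interpret prob_space P by (rule P)
  have "{\<omega>\<in>space P. hist L t \<omega> \<in> space (N t)} = space P"
    using measurable_space[OF hist_L[OF t]] by auto
  moreover have "{\<omega>\<in>space P. U t \<omega> \<le> c \<and> hist L t \<omega> \<in> space (N t)} = {\<omega>\<in>space P. U t \<omega> \<le> c}"
    using measurable_space[OF hist_L[OF t]] by auto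
  ultimately show ?thesis using pitU[OF t sets.top[of "N t"], of c] by (simp add: prob_space)
qed

lemma chain:
  assumes T: "T \<subseteq> {1..n}"
  shows "measure P {\<omega>\<in>space P. \<forall>t\<in>T. U t \<omega> \<le> c t} = (\<Prod>t\<in>T. max 0 (min 1 (c t)))"
proof -
  interpret prob_space P by (rule P)
  have "\<forall>T. T \<subseteq> {1..n} \<and> T \<subseteq> {..<k} \<longrightarrow>
     measure P {\<omega>\<in>space P. \<forall>t\<in>T. U t \<omega> \<le> c t} = (\<Prod>t\<in>T. max 0 (min 1 (c t)))" for k
  proof (induction k)
    case 0
    then show ?case by (simp add: prob_space)
  next
    case (Suc k)
    show ?case
    proof (intro allI impI)
      fix T assume T: "T \<subseteq> {1..n} \<and> T \<subseteq> {..<Suc k}"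
      show "measure P {\<omega>\<in>space P. \<forall>t\<in>T. U t \<omega> \<le> c t} = (\<Prod>t\<in>T. max 0 (min 1 (c t)))"
      proof (cases "k \<in> T")
        case False
        then have "T \<subseteq> {..<k}" using T by (auto simp: less_Suc_eq subset_iff)
        then show ?thesis using Suc.IH T by blast
      next
        case True
        define T' where "T' = T - {k}"
        have k: "k \<in> {1..n}" using True T by auto
        have T': "T' \<subseteq> {1..n} \<and> T' \<subseteq> {..<k}" using T unfolding T'_def by auto
        have fin: "finite T" using T finite_subset by blast
        define B where "B = {y\<in>space (N k). \<forall>s\<in>T'. F s (y s) (restrict y {1..<s}) \<le> c s}"
        have B: "B \<in> sets (N k)"
          unfolding B_def
        proof (rule sets.sets_Collect_finite_All)
          show "finite T'" using fin T'_def by auto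
          fix s assume s: "s \<in> T'"
          then have s1: "s \<in> {1..n}" and sk: "s < k" using T' by auto
          have g: "(\<lambda>y::nat\<Rightarrow>real. y s) \<in> borel_measurable (N k)"
            using s1 sk by (intro measurable_component_singleton) auto
          have r: "(\<lambda>y. restrict y {1..<s}) \<in> measurable (N k) (N s)"
            using sk by (intro measurable_restrict_subset) auto
          have "(\<lambda>y. F s (y s) (restrict y {1..<s})) \<in> borel_measurable (N k)"
            by (rule caratheodory_meas[OF Fm[OF s1] F_cont[OF s1] g r])
          then show "{y\<in>space (N k). F s (y s) (restrict y {1..<s}) \<le> c s} \<in> sets (N k)"
            by measurable
        qed
        have hk: "hist L k \<omega> s = L s \<omega>" "restrict (hist L k \<omega>) {1..<s} = hist L s \<omega>"
          if "s \<in> T'" for s \<omega>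
          using that T' by (auto simp: hist_def restrict_def fun_eq_iff)
        have pw: "hist L k \<omega> \<in> B \<longleftrightarrow> (\<forall>t\<in>T'. U t \<omega> \<le> c t)" if "\<omega> \<in> space P" for \<omega>
        proof -
          have "hist L k \<omega> \<in> space (N k)"
            using measurable_space[OF hist_L[OF k] that] .
          moreover have "(\<forall>s\<in>T'. F s (hist L k \<omega> s) (restrict (hist L k \<omega>) {1..<s}) \<le> c s)
              \<longleftrightarrow> (\<forall>t\<in>T'. U t \<omega> \<le> c t)"
            by (rule ball_cong[OF refl]) (simp only: hk U_def)
          ultimately show ?thesis unfolding B_def by (simp only: mem_Collect_eq simp_thms)
        qed
        have eq1: "{\<omega>\<in>space P. \<forall>t\<in>T. U t \<omega> \<le> c t}
            = {\<omega>\<in>space P. U k \<omega> \<le> c k \<and> hist L k \<omega> \<in> B}"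
        proof -
          have "T = insert k T'" using True unfolding T'_def by auto
          then show ?thesis using pw by auto
        qed
        have eq2: "{\<omega>\<in>space P. hist L k \<omega> \<in> B} = {\<omega>\<in>space P. \<forall>t\<in>T'. U t \<omega> \<le> c t}"
          using pw by auto
        have "measure P {\<omega>\<in>space P. \<forall>t\<in>T. U t \<omega> \<le> c t}
            = max 0 (min 1 (c k)) * measure P {\<omega>\<in>space P. \<forall>t\<in>T'. U t \<omega> \<le> c t}"
          unfolding eq1 pitU[OF k B] eq2 ..
        also have "\<dots> = max 0 (min 1 (c k)) * (\<Prod>t\<in>T'. max 0 (min 1 (c t)))"
          using Suc.IH T' by simp
        also have "\<dots> = (\<Prod>t\<in>T. max 0 (min 1 (c t)))"
          using True fin unfolding T'_def by (simp add: prod.remove)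
        finally show ?thesis .
      qed
    qed
  qed
  then show ?thesis using T by (meson atLeastAtMost_iff lessI order_le_less_trans subset_iff lessThan_iff)
qed

end

locale setting2 = setting P L M F n for P :: "'a measure" and L M F n +
  fixes Gr :: "nat \<Rightarrow> nat \<Rightarrow> 'a \<Rightarrow> real" and m :: nat
  assumes Gr_rv: "\<And>t j. t \<in> {1..n} \<Longrightarrow> j \<in> {1..m+1} \<Longrightarrow> Gr t j \<in> borel_measurable P"
    and Gr_indep: "prob_space.indep_sets P
        (\<lambda>k. case k of
               None \<Rightarrow> sets (vimage_algebra (space P) (\<lambda>\<omega>. \<lambda>i\<in>{1..n}. (L i \<omega>, M i \<omega>))
                                (PiM {1..n} (\<lambda>_. borel \<Otimes>\<^sub>M borel)))
             | Some (t, j) \<Rightarrow> sets (vimage_algebra (space P) (Gr t j) borel))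
        (insert None (Some ` ({1..n} \<times> {1..m+1})))"
begin

abbreviation "PiLM \<equiv> PiM {1..n} (\<lambda>_::nat. (borel \<Otimes>\<^sub>M borel :: (real \<times> real) measure))"
definition "VLM \<omega> = (\<lambda>i\<in>{1..n}. (L i \<omega>, M i \<omega>))"

lemma VLM_meas: "VLM \<in> measurable P PiLM"
  unfolding VLM_def using L_rv M_rv by (intro measurable_restrict measurable_Pair) auto

lemma E_in:
  assumes T: "T \<subseteq> {1..n}"
  shows "{\<omega>\<in>space P. \<forall>t\<in>T. U t \<omega> \<le> c t} \<in> sets (vimage_algebra (space P) VLM PiLM)"
proof -
  have fT: "finite T" using T finite_subset by blast
  define Q where "Q = {v\<in>space PiLM. \<forall>t\<in>T. F t (fst (v t)) (\<lambda>i\<in>{1..<t}. fst (v i)) \<le> c t}"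
  have Q: "Q \<in> sets PiLM"
    unfolding Q_def
  proof (rule sets.sets_Collect_finite_All[OF _ fT])
    fix t assume "t \<in> T"
    then have t: "t \<in> {1..n}" using T by auto
    have g: "(\<lambda>v. fst (v t)) \<in> borel_measurable PiLM"
      using t by measurable
    have k: "(\<lambda>v. \<lambda>i\<in>{1..<t}. fst (v i)) \<in> measurable PiLM (N t)"
      using t by (intro measurable_restrict) measurable
    have "(\<lambda>v. F t (fst (v t)) (\<lambda>i\<in>{1..<t}. fst (v i))) \<in> borel_measurable PiLM"
      by (rule caratheodory_meas[OF Fm[OF t] F_cont[OF t] g k])
    then show "{v\<in>space PiLM. F t (fst (v t)) (\<lambda>i\<in>{1..<t}. fst (v i)) \<le> c t} \<in> sets PiLM"
      by measurable
  qed
  have sp: "VLM \<in> space P \<rightarrow> space PiLM" using VLM_meas by (rule measurable_space[THEN Pi_I])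
  have veq: "VLM -` Q \<inter> space P = {\<omega>\<in>space P. \<forall>t\<in>T. U t \<omega> \<le> c t}"
  proof -
    have pw: "F t (fst (VLM \<omega> t)) (\<lambda>i\<in>{1..<t}. fst (VLM \<omega> i)) = U t \<omega>" if "t \<in> T" for t \<omega>
    proof -
      have "(\<lambda>i\<in>{1..<t}. fst (VLM \<omega> i)) = hist L t \<omega>"
        using that T by (auto simp: VLM_def hist_def restrict_def fun_eq_iff)
      moreover have "fst (VLM \<omega> t) = L t \<omega>" using that T by (auto simp: VLM_def)
      ultimately show ?thesis by (simp add: U_def)
    qed
    have pw2: "(\<forall>t\<in>T. F t (fst (VLM \<omega> t)) (\<lambda>i\<in>{1..<t}. fst (VLM \<omega> i)) \<le> c t) \<longleftrightarrow> (\<forall>t\<in>T. U t \<omega> \<le> c t)" for \<omega>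
      by (rule ball_cong[OF refl]) (simp only: pw)
    show ?thesis using sp unfolding Q_def vimage_def Int_def by (auto simp only: pw2 mem_Collect_eq Pi_iff)
  qed
  show ?thesis unfolding sets_vimage_algebra2[OF sp] veq[symmetric] using Q by blast
qed

definition "Xc i = (case i of Inl t \<Rightarrow> U t | Inr (t, j) \<Rightarrow> Gr t j)"
definition "Ic = Inl ` {1..n} \<union> Inr ` ({1..n} \<times> {1..m+1})"
definition "Gen i = (case i of Inl t \<Rightarrow> {{\<omega>\<in>space P. U t \<omega> \<le> c} | c. True}
                              | Inr (t, j) \<Rightarrow> {Gr t j -` A \<inter> space P | A. A \<in> sets borel})"

lemma Gr_vimage: "sets (vimage_algebra (space P) (Gr t j) borel) = {Gr t j -` A \<inter> space P | A. A \<in> sets borel}"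
  by (rule sets_vimage_algebra2) auto

lemma Gen_events: "i \<in> Ic \<Longrightarrow> Gen i \<subseteq> sets P"
proof (cases i)
  case (Inl t)
  assume "i \<in> Ic"
  with Inl have t: "t \<in> {1..n}" by (auto simp: Ic_def)
  show ?thesis using U_meas[OF t] by (auto simp: Gen_def Inl)
next
  case (Inr p)
  assume "i \<in> Ic"
  with Inr obtain t j where p: "p = (t, j)" "t \<in> {1..n}" "j \<in> {1..m+1}" by (auto simp: Ic_def)
  show ?thesis using Gr_rv[OF p(2,3)] by (auto simp: Gen_def Inr p(1))
qed

lemma Gen_indep: "prob_space.indep_sets P Gen Ic"
proof -
  interpret prob_space P by (rule P)
  show ?thesis
  proof (rule indep_setsI)
    fix i assume "i \<in> Ic"
    then show "Gen i \<subseteq> events" by (rule Gen_events)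
  next
    fix A J assume J: "J \<noteq> {}" "J \<subseteq> Ic" "finite J" and AJ: "\<forall>j\<in>J. A j \<in> Gen j"
    define T where "T = Inl -` J"
    define S where "S = Inr -` J"
    have fT: "finite T" "finite S" unfolding T_def S_def using J(3) by (auto intro: finite_vimageI)
    have TS: "T \<subseteq> {1..n}" "S \<subseteq> {1..n} \<times> {1..m+1}" using J(2) unfolding T_def S_def Ic_def by auto
    have Jeq: "J = Inl ` T \<union> Inr ` S"
    proof (rule set_eqI)
      fix x show "x \<in> J \<longleftrightarrow> x \<in> Inl ` T \<union> Inr ` S" by (cases x) (auto simp: T_def S_def)
    qed
    have "\<forall>t\<in>T. \<exists>c. A (Inl t) = {\<omega>\<in>space P. U t \<omega> \<le> c}"
      using AJ unfolding T_def Gen_def by auto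
    from bchoice[OF this] obtain c where c: "\<forall>t\<in>T. A (Inl t) = {\<omega>\<in>space P. U t \<omega> \<le> c t}" by blast
    have AS: "A (Inr p) \<in> sets (vimage_algebra (space P) (Gr (fst p) (snd p)) borel)" if "p \<in> S" for p
      using AJ that unfolding S_def Gen_def Gr_vimage by (auto split: prod.splits)
    have Asp: "A j \<subseteq> space P" if "j \<in> J" for j
      using Gen_events[of j] J(2) AJ that sets.sets_into_space by blast
    define E where "E = {\<omega>\<in>space P. \<forall>t\<in>T. U t \<omega> \<le> c t}"
    have int_eq: "\<Inter> (A ` J) = E \<inter> (\<Inter>p\<in>S. A (Inr p))"
    proof (intro equalityI subsetI)
      fix x assume x: "x \<in> \<Inter> (A ` J)"
      obtain j0 where "j0 \<in> J" using J(1) by blast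
      then have sp: "x \<in> space P" using x Asp by blast
      have "x \<in> A (Inl t)" if "t \<in> T" for t using x that unfolding T_def by auto
      then have "x \<in> E" using c sp unfolding E_def by auto
      moreover have "x \<in> A (Inr p)" if "p \<in> S" for p using x that unfolding S_def by auto
      ultimately show "x \<in> E \<inter> (\<Inter>p\<in>S. A (Inr p))" by auto
    next
      fix x assume x: "x \<in> E \<inter> (\<Inter>p\<in>S. A (Inr p))"
      have "x \<in> A j" if "j \<in> J" for j
      proof (cases j)
        case (Inl t)
        then have "t \<in> T" using that unfolding T_def by auto
        then show ?thesis using x c Inl unfolding E_def by auto
      next
        case (Inr p)
        then have "p \<in> S" using that unfolding S_def by auto
        then show ?thesis using x Inr by auto
      qed
      then show "x \<in> \<Inter> (A ` J)" by auto
    qed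
    define A'' where "A'' k = (case k of None \<Rightarrow> E | Some p \<Rightarrow> A (Inr p))" for k
    have "prob (\<Inter> (A'' ` insert None (Some ` S))) = (\<Prod>k\<in>insert None (Some ` S). prob (A'' k))"
    proof (rule indep_setsD[OF Gr_indep])
      show "insert None (Some ` S) \<subseteq> insert None (Some ` ({1..n} \<times> {1..m+1}))" using TS by auto
      show "insert None (Some ` S) \<noteq> {}" by simp
      show "finite (insert None (Some ` S))" using fT by simp
      show "\<forall>k\<in>insert None (Some ` S). A'' k \<in> (case k of
               None \<Rightarrow> sets (vimage_algebra (space P) (\<lambda>\<omega>. \<lambda>i\<in>{1..n}. (L i \<omega>, M i \<omega>))
                                (PiM {1..n} (\<lambda>_. borel \<Otimes>\<^sub>M borel)))
             | Some (t, j) \<Rightarrow> sets (vimage_algebra (space P) (Gr t j) borel))"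
      proof
        fix k assume k: "k \<in> insert None (Some ` S)"
        show "A'' k \<in> (case k of
               None \<Rightarrow> sets (vimage_algebra (space P) (\<lambda>\<omega>. \<lambda>i\<in>{1..n}. (L i \<omega>, M i \<omega>))
                                (PiM {1..n} (\<lambda>_. borel \<Otimes>\<^sub>M borel)))
             | Some (t, j) \<Rightarrow> sets (vimage_algebra (space P) (Gr t j) borel))"
        proof (cases k)
          case None
          then show ?thesis using E_in[OF TS(1), of c] unfolding A''_def E_def VLM_def by simp
        next
          case (Some p)
          then have "p \<in> S" using k by auto
          then show ?thesis using AS[of p] Some unfolding A''_def by (auto split: prod.splits)
        qed
      qed
    qed
    moreover have "\<Inter> (A'' ` insert None (Some ` S)) = E \<inter> (\<Inter>p\<in>S. A (Inr p))"
      unfolding A''_def by (auto simp: image_image)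
    moreover have "(\<Prod>k\<in>insert None (Some ` S). prob (A'' k)) = prob E * (\<Prod>p\<in>S. prob (A (Inr p)))"
      using fT by (simp add: prod.reindex A''_def comp_def)
    ultimately have 1: "prob (\<Inter> (A ` J)) = prob E * (\<Prod>p\<in>S. prob (A (Inr p)))"
      using int_eq by simp
    have "prob E = (\<Prod>t\<in>T. max 0 (min 1 (c t)))" unfolding E_def by (rule chain[OF TS(1)])
    also have "\<dots> = (\<Prod>t\<in>T. prob (A (Inl t)))"
      using c TS(1) margU by (intro prod.cong refl) auto
    finally have 2: "prob E = (\<Prod>t\<in>T. prob (A (Inl t)))" .
    have "(\<Prod>j\<in>J. prob (A j)) = (\<Prod>j\<in>Inl ` T. prob (A j)) * (\<Prod>j\<in>Inr ` S. prob (A j))"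
      unfolding Jeq using fT by (intro prod.union_disjoint) auto
    also have "\<dots> = (\<Prod>t\<in>T. prob (A (Inl t))) * (\<Prod>p\<in>S. prob (A (Inr p)))"
      by (simp add: prod.reindex comp_def)
    finally show "prob (\<Inter> (A ` J)) = (\<Prod>j\<in>J. prob (A j))" using 1 2 by simp
  qed
qed

lemma Xc_rv: "i \<in> Ic \<Longrightarrow> Xc i \<in> borel_measurable P"
  unfolding Ic_def Xc_def by (auto intro!: U_meas Gr_rv)

lemma Xc_indep: "prob_space.indep_vars P (\<lambda>_. borel) Xc Ic"
proof -
  interpret prob_space P by (rule P)
  have st: "Int_stable (Gen i)" if "i \<in> Ic" for i
  proof (cases i)
    case (Inl t)
    show ?thesis unfolding Gen_def Inl sum.case
    proof (rule Int_stableI)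
      fix a b assume "a \<in> {{\<omega>\<in>space P. U t \<omega> \<le> c} | c. True}" "b \<in> {{\<omega>\<in>space P. U t \<omega> \<le> c} | c. True}"
      then obtain ca cb where "a = {\<omega>\<in>space P. U t \<omega> \<le> ca}" "b = {\<omega>\<in>space P. U t \<omega> \<le> cb}" by auto
      then have "a \<inter> b = {\<omega>\<in>space P. U t \<omega> \<le> min ca cb}" by auto
      then show "a \<inter> b \<in> {{\<omega>\<in>space P. U t \<omega> \<le> c} | c. True}" by blast
    qed
  next
    case (Inr p)
    obtain t j where p: "p = (t, j)" by (cases p)
    show ?thesis unfolding Gen_def Inr p
    proof (simp only: prod.case sum.case, rule Int_stableI)
      fix a b assume "a \<in> {Gr t j -` A \<inter> space P |A. A \<in> sets borel}" "b \<in> {Gr t j -` A \<inter> space P |A. A \<in> sets borel}"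
      then obtain A B where "a = Gr t j -` A \<inter> space P" "b = Gr t j -` B \<inter> space P" "A \<in> sets borel" "B \<in> sets borel" by auto
      then have "a \<inter> b = Gr t j -` (A \<inter> B) \<inter> space P" "A \<inter> B \<in> sets borel" by auto
      then show "a \<inter> b \<in> {Gr t j -` A \<inter> space P |A. A \<in> sets borel}" by blast
    qed
  qed
  have ind: "indep_sets (\<lambda>i. sigma_sets (space P) (Gen i)) Ic"
    by (rule indep_sets_sigma[OF Gen_indep st])
  have sb: "sets (borel :: real measure) = sigma_sets UNIV (range atMost)"
    by (subst borel_eq_atMost) (rule sets_measure_of, simp)
  show ?thesis unfolding indep_vars_def
  proof (intro conjI ballI)
    fix i assume "i \<in> Ic" then show "random_variable borel (Xc i)" by (rule Xc_rv)
  next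
    show "indep_sets (\<lambda>i. sigma_sets (space P) {Xc i -` A \<inter> space P |A. A \<in> sets borel}) Ic"
    proof (rule indep_sets_mono_sets[OF ind])
      fix i assume i: "i \<in> Ic"
      show "sigma_sets (space P) {Xc i -` A \<inter> space P |A. A \<in> sets borel} \<subseteq> sigma_sets (space P) (Gen i)"
      proof (cases i)
        case (Inl t)
        have "{Xc i -` A \<inter> space P |A. A \<in> sets borel} = {U t -` A \<inter> space P |A. A \<in> sigma_sets UNIV (range atMost)}"
          unfolding sb Inl Xc_def by simp
        also have "\<dots> = sigma_sets (space P) {U t -` A \<inter> space P |A. A \<in> range atMost}"
          by (rule sigma_sets_vimage_commute) simp
        also have "{U t -` A \<inter> space P |A. A \<in> range atMost} = Gen i"
        proof -
          have "\<exists>A. {\<omega> \<in> space P. U t \<omega> \<le> c} = U t -` A \<inter> space P \<and> A \<in> range atMost" for c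
            by (rule exI[of _ "{..c}"]) auto
          then show ?thesis unfolding Gen_def Inl by auto
        qed
        finally show ?thesis by (intro sigma_sets_mono) simp
      next
        case (Inr p)
        obtain t j where p: "p = (t, j)" by (cases p)
        have "{Xc i -` A \<inter> space P |A. A \<in> sets borel} = Gen i"
          unfolding Gen_def Xc_def Inr p by simp
        then show ?thesis by (intro sigma_sets_mono) auto
      qed
    qed
  qed
qed

definition "K t = insert (Inl t) (Inr ` ({t} \<times> {1..m+1}))"
definition "Vv t \<omega> = (\<lambda>j\<in>{1..m+1}. if 1 - Gr t j \<omega> < U t \<omega> then 1 else (0::real))"

lemma V_indep: "prob_space.indep_vars P (\<lambda>_. PiM {1..m+1} (\<lambda>_. borel)) Vv {1..n}"
proof -
  interpret prob_space P by (rule P)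
  have "indep_vars (\<lambda>t. PiM (K t) (\<lambda>_. borel)) (\<lambda>t \<omega>. restrict (\<lambda>i. Xc i \<omega>) (K t)) {1..n}"
  proof (rule indep_vars_restrict[OF Xc_indep])
    show "K t \<subseteq> Ic" if "t \<in> {1..n}" for t using that unfolding K_def Ic_def by auto
    show "disjoint_family_on K {1..n}" unfolding disjoint_family_on_def K_def by auto
  qed
  define phi where "phi t v = (\<lambda>j\<in>{1..m+1}. if 1 - v (Inr (t, j)) < v (Inl t) then 1 else (0::real))"
    for t and v :: "nat + nat \<times> nat \<Rightarrow> real"
  have phim: "phi t \<in> measurable (PiM (K t) (\<lambda>_. borel)) (PiM {1..m+1} (\<lambda>_. borel))" for t
  proof -
    have a: "(\<lambda>v::nat + nat \<times> nat \<Rightarrow> real. v (Inl t)) \<in> borel_measurable (PiM (K t) (\<lambda>_. borel))"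
      by (rule measurable_component_singleton) (simp add: K_def)
    have b: "(\<lambda>v::nat + nat \<times> nat \<Rightarrow> real. v (Inr (t, j))) \<in> borel_measurable (PiM (K t) (\<lambda>_. borel))"
      if "j \<in> {1..m+1}" for j
      using that by (intro measurable_component_singleton) (simp add: K_def)
    show ?thesis unfolding phi_def
      by (intro measurable_restrict) (use a b in measurable)
  qed
  have "indep_vars (\<lambda>_. PiM {1..m+1} (\<lambda>_. borel)) (\<lambda>t \<omega>. phi t (restrict (\<lambda>i. Xc i \<omega>) (K t))) {1..n}"
    by (rule indep_vars_compose2[OF \<open>indep_vars _ _ {1..n}\<close> phim])
  moreover have "phi t (restrict (\<lambda>i. Xc i \<omega>) (K t)) = Vv t \<omega>" for t \<omega>
    unfolding phi_def Vv_def K_def by (auto simp: Xc_def fun_eq_iff)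
  ultimately show ?thesis by simp
qed

lemma UGr_indep:
  assumes "t \<in> {1..n}" "j \<in> {1..m+1}"
  shows "prob_space.indep_var P borel (U t) borel (Gr t j)"
proof -
  interpret prob_space P by (rule P)
  have "indep_var borel ((\<lambda>f. f (Inl t)) \<circ> (\<lambda>\<omega>. restrict (\<lambda>i. Xc i \<omega>) {Inl t}))
                  borel ((\<lambda>f. f (Inr (t, j))) \<circ> (\<lambda>\<omega>. restrict (\<lambda>i. Xc i \<omega>) {Inr (t, j)}))"
    using assms
    by (intro indep_var_compose[OF indep_var_restrict[OF Xc_indep]] measurable_component_singleton)
       (auto simp: Ic_def)
  moreover have "(\<lambda>f. f (Inl t)) \<circ> (\<lambda>\<omega>. restrict (\<lambda>i. Xc i \<omega>) {Inl t}) = U t"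
    by (auto simp: fun_eq_iff Xc_def)
  moreover have "(\<lambda>f. f (Inr (t, j))) \<circ> (\<lambda>\<omega>. restrict (\<lambda>i. Xc i \<omega>) {Inr (t, j)}) = Gr t j"
    by (auto simp: fun_eq_iff Xc_def)
  ultimately show ?thesis by simp
qed

end

lemma (in prob_space) indep_fubini:
  fixes X Y :: "'a \<Rightarrow> real"
  assumes ind: "indep_var borel X borel Y" and D: "D \<in> sets (borel \<Otimes>\<^sub>M borel)"
  shows "emeasure M {\<omega>\<in>space M. (X \<omega>, Y \<omega>) \<in> D} = (\<integral>\<^sup>+\<omega>. emeasure M {\<omega>'\<in>space M. (X \<omega>', Y \<omega>) \<in> D} \<partial>M)"
proof -
  have X: "X \<in> borel_measurable M" and Y: "Y \<in> borel_measurable M"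
    using ind by (blast dest: indep_var_rv1 indep_var_rv2)+
  have XY: "(\<lambda>\<omega>. (X \<omega>, Y \<omega>)) \<in> measurable M (borel \<Otimes>\<^sub>M borel)" using X Y by (rule measurable_Pair)
  interpret MX: prob_space "distr M borel X" by (rule prob_space_distr[OF X])
  interpret MY: prob_space "distr M borel Y" by (rule prob_space_distr[OF Y])
  interpret XYp: pair_prob_space "distr M borel X" "distr M borel Y" ..
  have D': "D \<in> sets (distr M borel X \<Otimes>\<^sub>M distr M borel Y)" using D by simp
  have sl: "(\<lambda>x. (x, y)) -` D \<in> sets borel" for y :: real
  proof -
    have "(\<lambda>x::real. (x, y)) \<in> measurable borel (borel \<Otimes>\<^sub>M borel)" by measurable
    from measurable_sets[OF this D] show ?thesis by simp
  qed
  have "emeasure M {\<omega>\<in>space M. (X \<omega>, Y \<omega>) \<in> D} = emeasure (distr M (borel \<Otimes>\<^sub>M borel) (\<lambda>\<omega>. (X \<omega>, Y \<omega>))) D"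
    by (subst emeasure_distr[OF XY D]) (auto intro!: arg_cong[where f="emeasure M"])
  also have "distr M (borel \<Otimes>\<^sub>M borel) (\<lambda>\<omega>. (X \<omega>, Y \<omega>)) = distr M borel X \<Otimes>\<^sub>M distr M borel Y"
    using ind by (simp add: indep_var_distribution_eq)
  also have "emeasure (distr M borel X \<Otimes>\<^sub>M distr M borel Y) D
      = (\<integral>\<^sup>+y. emeasure (distr M borel X) ((\<lambda>x. (x, y)) -` D) \<partial>distr M borel Y)"
    by (rule XYp.emeasure_pair_measure_alt2[OF D'])
  also have "\<dots> = (\<integral>\<^sup>+\<omega>. emeasure (distr M borel X) ((\<lambda>x. (x, Y \<omega>)) -` D) \<partial>M)"
    by (rule nn_integral_distr[OF Y XYp.measurable_emeasure_Pair2[OF D']])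
  also have "\<dots> = (\<integral>\<^sup>+\<omega>. emeasure M {\<omega>'\<in>space M. (X \<omega>', Y \<omega>) \<in> D} \<partial>M)"
  proof (rule nn_integral_cong)
    fix \<omega>
    show "emeasure (distr M borel X) ((\<lambda>x. (x, Y \<omega>)) -` D) = emeasure M {\<omega>'\<in>space M. (X \<omega>', Y \<omega>) \<in> D}"
      by (subst emeasure_distr[OF X sl]) (auto intro!: arg_cong[where f="emeasure M"])
  qed
  finally show ?thesis .
qed

lemma cq_gt:
  fixes f :: "real \<Rightarrow> real"
  assumes c: "continuous_on UNIV f" and fx: "u < f x"
  shows "cquantile f u < ereal x"
proof -
  have "isCont f x" using c continuous_on_eq_continuous_at[OF open_UNIV] by fast
  then have "(f \<longlongrightarrow> f x) (at_left x)" by (simp add: isCont_def filterlim_at_split)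
  from order_tendstoD(1)[OF this fx] obtain b where b: "b < x" "\<And>y. b < y \<Longrightarrow> y < x \<Longrightarrow> u < f y"
    unfolding eventually_at_left[of "x - 1" x, simplified] by blast
  define z where "z = (b + x) / 2"
  have z: "b < z" "z < x" using b(1) unfolding z_def by auto
  have "cquantile f u \<le> ereal z" unfolding cquantile_def
    by (rule Inf_lower) (use b(2)[OF z] in \<open>auto intro: less_imp_le\<close>)
  also have "\<dots> < ereal x" using z by simp
  finally show ?thesis .
qed

lemma cq_le:
  fixes f :: "real \<Rightarrow> real"
  assumes m: "mono f" and fx: "f x < u"
  shows "ereal x \<le> cquantile f u"
  unfolding cquantile_def
proof (rule Inf_greatest)
  fix e assume "e \<in> {ereal x |x. u \<le> f x}"
  then obtain z where z: "e = ereal z" "u \<le> f z" by auto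
  have "x < z"
  proof (rule ccontr)
    assume "\<not> x < z"
    then have "f z \<le> f x" using m by (simp add: mono_def)
    with z fx show False by simp
  qed
  then show "ereal x \<le> e" using z by simp
qed

lemma cq_rat:
  fixes f :: "real \<Rightarrow> real"
  assumes m: "mono f"
  shows "cquantile f u < ereal x \<longleftrightarrow> (\<exists>r\<in>\<rat>. r < x \<and> u \<le> f r)"
proof
  assume "cquantile f u < ereal x"
  then obtain e where e: "e \<in> {ereal x |x. u \<le> f x}" "e < ereal x"
    unfolding cquantile_def Inf_less_iff by blast
  then obtain z where z: "e = ereal z" "u \<le> f z" by auto
  with e have "z < x" by simp
  then obtain r where r: "r \<in> \<rat>" "z < r" "r < x" using Rats_dense_in_real by blast
  have "f z \<le> f r" using m r(2) by (simp add: mono_def)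
  then show "\<exists>r\<in>\<rat>. r < x \<and> u \<le> f r" using r z by auto
next
  assume "\<exists>r\<in>\<rat>. r < x \<and> u \<le> f r"
  then obtain r where r: "r < x" "u \<le> f r" by auto
  have "cquantile f u \<le> ereal r" unfolding cquantile_def by (rule Inf_lower) (use r in auto)
  also have "\<dots> < ereal x" using r by simp
  finally show "cquantile f u < ereal x" .
qed

context setting2
begin

lemma U_no_atom:
  assumes t: "t \<in> {1..n}"
  shows "measure P {\<omega>\<in>space P. U t \<omega> = c} = 0"
proof -
  interpret prob_space P by (rule P)
  have le: "measure P {\<omega>\<in>space P. U t \<omega> = c} \<le> e" if e: "0 < e" for e
  proof -
    have "measure P {\<omega>\<in>space P. U t \<omega> = c}
        \<le> measure P ({\<omega>\<in>space P. U t \<omega> \<le> c} - {\<omega>\<in>space P. U t \<omega> \<le> c - e})"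
      using t e by (intro finite_measure_mono) auto
    also have "\<dots> = measure P {\<omega>\<in>space P. U t \<omega> \<le> c} - measure P {\<omega>\<in>space P. U t \<omega> \<le> c - e}"
      using t e by (intro finite_measure_Diff) auto
    also have "\<dots> = max 0 (min 1 c) - max 0 (min 1 (c - e))" using margU[OF t] by simp
    also have "\<dots> \<le> e" using e by (simp add: max_def min_def)
    finally show ?thesis .
  qed
  have "measure P {\<omega>\<in>space P. U t \<omega> = c} \<le> 0"
  proof (rule ccontr)
    assume "\<not> ?thesis"
    then have "0 < measure P {\<omega>\<in>space P. U t \<omega> = c} / 2" by simp
    from le[OF this] \<open>\<not> ?thesis\<close> show False by simp
  qed
  then show ?thesis by (simp add: order_antisym measure_nonneg)
qed

lemma AE_neq:
  assumes t: "t \<in> {1..n}" and j: "j \<in> {1..m+1}"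
  shows "AE \<omega> in P. U t \<omega> \<noteq> 1 - Gr t j \<omega>"
proof -
  interpret prob_space P by (rule P)
  have D: "{(u, g::real). u = 1 - g} \<in> sets (borel \<Otimes>\<^sub>M borel)"
  proof -
    have "{(u, g::real). u = 1 - g} = {x\<in>space (borel \<Otimes>\<^sub>M borel). fst x = 1 - snd x}"
      by (auto simp: space_pair_measure)
    also have "\<dots> \<in> sets (borel \<Otimes>\<^sub>M borel)" by measurable
    finally show ?thesis .
  qed
  have "emeasure P {\<omega>\<in>space P. (U t \<omega>, Gr t j \<omega>) \<in> {(u, g). u = 1 - g}}
      = (\<integral>\<^sup>+\<omega>. emeasure P {\<omega>'\<in>space P. (U t \<omega>', Gr t j \<omega>) \<in> {(u, g). u = 1 - g}} \<partial>P)"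
    by (rule indep_fubini[OF UGr_indep[OF t j] D])
  also have "\<dots> = (\<integral>\<^sup>+\<omega>. 0 \<partial>P)"
  proof (rule nn_integral_cong)
    fix \<omega>
    have "emeasure P {\<omega>'\<in>space P. (U t \<omega>', Gr t j \<omega>) \<in> {(u, g). u = 1 - g}}
        = emeasure P {\<omega>'\<in>space P. U t \<omega>' = 1 - Gr t j \<omega>}" by simp
    also have "\<dots> = 0" using U_no_atom[OF t] by (simp add: emeasure_eq_measure)
    finally show "emeasure P {\<omega>'\<in>space P. (U t \<omega>', Gr t j \<omega>) \<in> {(u, g). u = 1 - g}} = 0" .
  qed
  finally have z: "emeasure P {\<omega>\<in>space P. U t \<omega> = 1 - Gr t j \<omega>} = 0" by simp
  have s: "{\<omega>\<in>space P. U t \<omega> = 1 - Gr t j \<omega>} \<in> sets P"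
    using U_meas[OF t] Gr_rv[OF t j] by measurable
  show ?thesis
    by (rule AE_I'[of "{\<omega>\<in>space P. U t \<omega> = 1 - Gr t j \<omega>}"]) (use z s in \<open>auto simp: null_sets_def\<close>)
qed

lemma exc_meas:
  assumes t: "t \<in> {1..n}" and j: "j \<in> {1..m+1}"
  shows "exc_ind F L Gr t j \<in> borel_measurable P"
proof -
  define S where "S = {\<omega>\<in>space P. \<exists>r\<in>\<rat>. r < L t \<omega> \<and> 1 - Gr t j \<omega> \<le> F t r (hist L t \<omega>)}"
  have S: "S \<in> sets P" unfolding S_def
  proof (rule sets.sets_Collect_countable_Ex'[OF _ countable_rat])
    fix r :: real
    have "(\<lambda>\<omega>. F t r (hist L t \<omega>)) \<in> borel_measurable P"
      using measurable_compose[OF hist_L[OF t] Fm[OF t]] .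
    then show "{\<omega>\<in>space P. r < L t \<omega> \<and> 1 - Gr t j \<omega> \<le> F t r (hist L t \<omega>)} \<in> sets P"
      using L_rv[OF t] Gr_rv[OF t j] by measurable
  qed
  have "exc_ind F L Gr t j \<omega> = indicator S \<omega>" if "\<omega> \<in> space P" for \<omega>
    using that cq_rat[OF Fmono[OF t, where y="hist L t \<omega>"], of "1 - Gr t j \<omega>" "L t \<omega>"]
    unfolding exc_ind_def S_def by (auto simp: indicator_def)
  then show ?thesis using borel_measurable_indicator[OF S] by (subst measurable_cong) auto
qed

lemma exc_eq:
  assumes t: "t \<in> {1..n}" and ne: "U t \<omega> \<noteq> 1 - Gr t j \<omega>"
  shows "exc_ind F L Gr t j \<omega> = (if 1 - Gr t j \<omega> < U t \<omega> then 1 else 0)"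
proof (cases "1 - Gr t j \<omega> < U t \<omega>")
  case True
  then have "cquantile (\<lambda>x. F t x (hist L t \<omega>)) (1 - Gr t j \<omega>) < ereal (L t \<omega>)"
    by (intro cq_gt F_cont[OF t]) (simp add: U_def)
  then show ?thesis using True by (simp add: exc_ind_def)
next
  case False
  with ne have "F t (L t \<omega>) (hist L t \<omega>) < 1 - Gr t j \<omega>" by (simp add: U_def)
  then have "ereal (L t \<omega>) \<le> cquantile (\<lambda>x. F t x (hist L t \<omega>)) (1 - Gr t j \<omega>)"
    by (intro cq_le Fmono[OF t])
  then show ?thesis using False by (simp add: exc_ind_def not_less)
qed

definition "Exc t \<omega> = (\<lambda>j\<in>{1..m+1}. exc_ind F L Gr t j \<omega>)"

lemma Exc_AE: "t \<in> {1..n} \<Longrightarrow> AE \<omega> in P. Exc t \<omega> = Vv t \<omega>"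
proof -
  assume t: "t \<in> {1..n}"
  have "AE \<omega> in P. \<forall>j\<in>{1..m+1}. U t \<omega> \<noteq> 1 - Gr t j \<omega>"
    using AE_neq[OF t] by (subst AE_finite_all) auto
  then show ?thesis
    by eventually_elim (auto simp: Exc_def Vv_def exc_eq[OF t] fun_eq_iff)
qed

lemma Exc_meas: "t \<in> {1..n} \<Longrightarrow> Exc t \<in> measurable P (PiM {1..m+1} (\<lambda>_. borel))"
  unfolding Exc_def by (intro measurable_restrict exc_meas) auto

lemma Vv_meas: "t \<in> {1..n} \<Longrightarrow> Vv t \<in> measurable P (PiM {1..m+1} (\<lambda>_. borel))"
proof -
  assume t: "t \<in> {1..n}"
  show ?thesis unfolding Vv_def
  proof (intro measurable_restrict)
    fix j assume j: "j \<in> {1..m+1}"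
    show "(\<lambda>\<omega>. if 1 - Gr t j \<omega> < U t \<omega> then 1 else (0::real)) \<in> borel_measurable P"
      using U_meas[OF t] Gr_rv[OF t j] by measurable
  qed
qed

lemma Exc_indep:
  assumes n: "n \<ge> 1"
  shows "prob_space.indep_vars P (\<lambda>_. PiM {1..m+1} (\<lambda>_. borel)) Exc {1..n}"
proof -
  interpret prob_space P by (rule P)
  have ne: "{1..n} \<noteq> {}" using n by simp
  have "distr P (PiM {1..n} (\<lambda>_. PiM {1..m+1} (\<lambda>_. borel))) (\<lambda>x. \<lambda>i\<in>{1..n}. Vv i x)
      = PiM {1..n} (\<lambda>i. distr P (PiM {1..m+1} (\<lambda>_. borel)) (Vv i))"
    using V_indep indep_vars_iff_distr_eq_PiM'[OF ne Vv_meas] by simp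
  moreover have "distr P (PiM {1..n} (\<lambda>_. PiM {1..m+1} (\<lambda>_. borel))) (\<lambda>x. \<lambda>i\<in>{1..n}. Exc i x)
      = distr P (PiM {1..n} (\<lambda>_. PiM {1..m+1} (\<lambda>_. borel))) (\<lambda>x. \<lambda>i\<in>{1..n}. Vv i x)"
  proof (rule distr_cong_AE)
    have "AE \<omega> in P. \<forall>i\<in>{1..n}. Exc i \<omega> = Vv i \<omega>"
      using Exc_AE by (subst AE_finite_all) auto
    then show "AE x in P. (\<lambda>i\<in>{1..n}. Exc i x) = (\<lambda>i\<in>{1..n}. Vv i x)"
      by eventually_elim (auto simp: fun_eq_iff)
    show "(\<lambda>x. \<lambda>i\<in>{1..n}. Exc i x) \<in> measurable P (PiM {1..n} (\<lambda>_. PiM {1..m+1} (\<lambda>_. borel)))"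
      using Exc_meas by (intro measurable_restrict) auto
    show "(\<lambda>x. \<lambda>i\<in>{1..n}. Vv i x) \<in> measurable P (PiM {1..n} (\<lambda>_. PiM {1..m+1} (\<lambda>_. borel)))"
      using Vv_meas by (intro measurable_restrict) auto
  qed simp_all
  moreover have "PiM {1..n} (\<lambda>i. distr P (PiM {1..m+1} (\<lambda>_. borel)) (Exc i))
      = PiM {1..n} (\<lambda>i. distr P (PiM {1..m+1} (\<lambda>_. borel)) (Vv i))"
  proof (rule PiM_cong[OF refl])
    fix i assume i: "i \<in> {1..n}"
    show "distr P (PiM {1..m+1} (\<lambda>_. borel)) (Exc i) = distr P (PiM {1..m+1} (\<lambda>_. borel)) (Vv i)"
      by (rule distr_cong_AE[OF refl refl Exc_AE[OF i] Exc_meas[OF i] Vv_meas[OF i]])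
  qed
  ultimately show ?thesis
    using indep_vars_iff_distr_eq_PiM'[OF ne Exc_meas] by simp
qed


end

locale setting3 = setting2 P L M F n Gr m for P :: "'a measure" and L M F n Gr m +
  fixes G :: "'a \<Rightarrow> real" and g :: "real \<Rightarrow> real" and \<alpha> :: "nat \<Rightarrow> real"
  assumes G_rv: "G \<in> borel_measurable P"
    and G_law: "\<And>u. u \<in> {0..1} \<Longrightarrow> measure P {\<omega>\<in>space P. G \<omega> < u} = g u"
    and \<alpha>0: "\<alpha> 0 = 0" and \<alpha>1: "\<alpha> (m + 1) = 1"
    and \<alpha>_mono: "strict_mono_on {0..m+1} \<alpha>"
    and g_jump: "\<And>j. j \<in> {1..m+1} \<Longrightarrow> g (\<alpha> j) - g (\<alpha> (j - 1)) \<noteq> 0"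
    and Gr_law: "\<And>t j A. t \<in> {1..n} \<Longrightarrow> j \<in> {1..m+1} \<Longrightarrow> A \<in> sets borel \<Longrightarrow>
        measure P {\<omega>\<in>space P. Gr t j \<omega> \<in> A}
        = measure P {\<omega>\<in>space P. G \<omega> \<in> A \<inter> {\<alpha> (j - 1)..<\<alpha> j}}
          / measure P {\<omega>\<in>space P. G \<omega> \<in> {\<alpha> (j - 1)..<\<alpha> j}}"
begin

lemma ab: "j \<in> {1..m+1} \<Longrightarrow> 0 \<le> \<alpha> (j - 1) \<and> \<alpha> (j - 1) \<le> \<alpha> j \<and> \<alpha> j \<le> 1"
  using strict_mono_on_leD[OF \<alpha>_mono, of 0 "j - 1"] strict_mono_on_leD[OF \<alpha>_mono, of "j - 1" j]
    strict_mono_on_leD[OF \<alpha>_mono, of j "m+1"] \<alpha>0 \<alpha>1 by auto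

lemma cI:
  assumes j: "j \<in> {1..m+1}"
  shows "measure P {\<omega>\<in>space P. G \<omega> \<in> {\<alpha> (j - 1)..<\<alpha> j}} = g (\<alpha> j) - g (\<alpha> (j - 1))"
proof -
  interpret prob_space P by (rule P)
  note ab = ab[OF j]
  have "{\<omega>\<in>space P. G \<omega> \<in> {\<alpha> (j - 1)..<\<alpha> j}} = {\<omega>\<in>space P. G \<omega> < \<alpha> j} - {\<omega>\<in>space P. G \<omega> < \<alpha> (j - 1)}"
    by auto
  also have "measure P \<dots> = measure P {\<omega>\<in>space P. G \<omega> < \<alpha> j} - measure P {\<omega>\<in>space P. G \<omega> < \<alpha> (j - 1)}"
    using ab G_rv by (intro finite_measure_Diff) auto
  also have "\<dots> = g (\<alpha> j) - g (\<alpha> (j - 1))" using ab by (simp add: G_law)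
  finally show ?thesis .
qed

lemma cpos: "j \<in> {1..m+1} \<Longrightarrow> 0 < measure P {\<omega>\<in>space P. G \<omega> \<in> {\<alpha> (j - 1)..<\<alpha> j}}"
  using cI[of j] g_jump[of j] measure_nonneg[of P] by (metis order_le_less)

lemma Gr_I:
  assumes t: "t \<in> {1..n}" and j: "j \<in> {1..m+1}"
  shows "AE \<omega> in P. Gr t j \<omega> \<in> {\<alpha> (j - 1)..<\<alpha> j}"
proof -
  interpret prob_space P by (rule P)
  have "measure P {\<omega>\<in>space P. Gr t j \<omega> \<in> - {\<alpha> (j - 1)..<\<alpha> j}} = 0"
    using Gr_law[OF t j, of "- {\<alpha> (j - 1)..<\<alpha> j}"] by simp
  moreover have "{\<omega>\<in>space P. Gr t j \<omega> \<in> - {\<alpha> (j - 1)..<\<alpha> j}} \<in> sets P"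
    using Gr_rv[OF t j] by measurable
  ultimately show ?thesis
    by (intro AE_I'[of "{\<omega>\<in>space P. Gr t j \<omega> \<in> - {\<alpha> (j - 1)..<\<alpha> j}}"])
       (auto simp: null_sets_def emeasure_eq_measure)
qed

lemma distr_Gr:
  assumes t: "t \<in> {1..n}" and j: "j \<in> {1..m+1}"
  defines "I \<equiv> {\<alpha> (j - 1)..<\<alpha> j}"
  defines "c \<equiv> measure P {\<omega>\<in>space P. G \<omega> \<in> I}"
  shows "distr P borel (Gr t j) = density (distr P borel G) (\<lambda>x. ennreal (indicator I x / c))"
proof (rule measure_eqI)
  interpret prob_space P by (rule P)
  have c: "0 < c" unfolding c_def I_def by (rule cpos[OF j])
  show "sets (distr P borel (Gr t j)) = sets (density (distr P borel G) (\<lambda>x. ennreal (indicator I x / c)))"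
    by simp
  fix A assume "A \<in> sets (distr P borel (Gr t j))"
  then have A: "A \<in> sets borel" by simp
  have GI: "{\<omega>\<in>space P. G \<omega> \<in> A \<inter> I} \<in> sets P" using G_rv A unfolding I_def by measurable
  have "emeasure (distr P borel (Gr t j)) A = emeasure P (Gr t j -` A \<inter> space P)"
    by (rule emeasure_distr[OF Gr_rv[OF t j] A])
  also have "\<dots> = ennreal (measure P {\<omega>\<in>space P. Gr t j \<omega> \<in> A})"
    by (simp add: emeasure_eq_measure vimage_def Int_def conj_commute)
  also have "\<dots> = ennreal (measure P {\<omega>\<in>space P. G \<omega> \<in> A \<inter> I} / c)"
    unfolding c_def I_def using Gr_law[OF t j A] by simp
  finally have 1: "emeasure (distr P borel (Gr t j)) A = ennreal (measure P {\<omega>\<in>space P. G \<omega> \<in> A \<inter> I} / c)" .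
  have fm: "(\<lambda>x. ennreal (indicator I x / c)) \<in> borel_measurable (distr P borel G)"
    unfolding I_def by measurable
  have "emeasure (density (distr P borel G) (\<lambda>x. ennreal (indicator I x / c))) A
      = (\<integral>\<^sup>+x. ennreal (indicator I x / c) * indicator A x \<partial>distr P borel G)"
    using emeasure_density[OF fm, of A] A by simp
  also have "\<dots> = (\<integral>\<^sup>+\<omega>. ennreal (indicator I (G \<omega>) / c) * indicator A (G \<omega>) \<partial>P)"
    by (rule nn_integral_distr[OF G_rv]) (use A in \<open>unfold I_def, measurable\<close>)
  also have "\<dots> = (\<integral>\<^sup>+\<omega>. ennreal (1 / c) * indicator {\<omega>\<in>space P. G \<omega> \<in> A \<inter> I} \<omega> \<partial>P)"
    by (rule nn_integral_cong) (auto simp: indicator_def)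
  also have "\<dots> = ennreal (1 / c) * emeasure P {\<omega>\<in>space P. G \<omega> \<in> A \<inter> I}"
    using GI by (simp add: nn_integral_cmult)
  also have "\<dots> = ennreal (measure P {\<omega>\<in>space P. G \<omega> \<in> A \<inter> I} / c)"
    using c by (simp add: emeasure_eq_measure ennreal_mult'[symmetric] measure_nonneg)
  finally show "emeasure (distr P borel (Gr t j)) A = emeasure (density (distr P borel G) (\<lambda>x. ennreal (indicator I x / c))) A"
    using 1 by simp
qed

lemma expect:
  assumes t: "t \<in> {1..n}" and j: "j \<in> {1..m+1}"
  shows "(\<integral>\<omega>. exc_ind F L Gr t j \<omega> \<partial>P)
       = (\<integral>\<omega>. G \<omega> * indicator {\<alpha> (j - 1)..<\<alpha> j} (G \<omega>) \<partial>P) / (g (\<alpha> j) - g (\<alpha> (j - 1)))"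
proof -
  interpret prob_space P by (rule P)
  define I where "I = {\<alpha> (j - 1)..<\<alpha> j}"
  define c where "c = measure P {\<omega>\<in>space P. G \<omega> \<in> I}"
  have c: "0 < c" unfolding c_def I_def by (rule cpos[OF j])
  have cg: "c = g (\<alpha> j) - g (\<alpha> (j - 1))" unfolding c_def I_def by (rule cI[OF j])
  have I01: "x \<in> I \<Longrightarrow> 0 \<le> x \<and> x \<le> 1" for x using ab[OF j] unfolding I_def by auto
  note Um = U_meas[OF t] and Grm = Gr_rv[OF t j]
  define S where "S = {\<omega>\<in>space P. 1 - Gr t j \<omega> < U t \<omega>}"
  have S: "S \<in> sets P" unfolding S_def using Um Grm by measurable
  have e1: "(\<integral>\<omega>. exc_ind F L Gr t j \<omega> \<partial>P) = measure P S"
  proof -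
    have "(\<integral>\<omega>. exc_ind F L Gr t j \<omega> \<partial>P) = (\<integral>\<omega>. indicator S \<omega> \<partial>P)"
    proof (rule integral_cong_AE)
      show "exc_ind F L Gr t j \<in> borel_measurable P" by (rule exc_meas[OF t j])
      show "indicator S \<in> borel_measurable P" using S by (rule borel_measurable_indicator)
      show "AE x in P. exc_ind F L Gr t j x = indicator S x"
        using AE_neq[OF t j] AE_space by eventually_elim (auto simp: exc_eq[OF t] S_def indicator_def)
    qed
    also have "\<dots> = measure P S" using S by (simp add: integral_indicator Int_absorb2 sets.sets_into_space)
    finally show ?thesis .
  qed
  have D: "{(u, v::real). 1 - v < u} \<in> sets (borel \<Otimes>\<^sub>M borel)"
  proof -
    have "{(u, v::real). 1 - v < u} = {x\<in>space (borel \<Otimes>\<^sub>M borel). 1 - snd x < fst x}"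
      by (auto simp: space_pair_measure)
    also have "\<dots> \<in> sets (borel \<Otimes>\<^sub>M borel)" by measurable
    finally show ?thesis .
  qed
  have "emeasure P S = emeasure P {\<omega>\<in>space P. (U t \<omega>, Gr t j \<omega>) \<in> {(u, v). 1 - v < u}}"
    unfolding S_def by simp
  also have "\<dots> = (\<integral>\<^sup>+\<omega>. emeasure P {\<omega>'\<in>space P. (U t \<omega>', Gr t j \<omega>) \<in> {(u, v). 1 - v < u}} \<partial>P)"
    by (rule indep_fubini[OF UGr_indep[OF t j] D])
  also have "\<dots> = (\<integral>\<^sup>+\<omega>. ennreal (Gr t j \<omega>) \<partial>P)"
  proof (rule nn_integral_cong_AE)
    show "AE \<omega> in P. emeasure P {\<omega>'\<in>space P. (U t \<omega>', Gr t j \<omega>) \<in> {(u, v). 1 - v < u}} = ennreal (Gr t j \<omega>)"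
      using Gr_I[OF t j]
    proof eventually_elim
      fix \<omega> assume "Gr t j \<omega> \<in> {\<alpha> (j - 1)..<\<alpha> j}"
      then have g01: "0 \<le> Gr t j \<omega>" "Gr t j \<omega> \<le> 1" using I01 unfolding I_def by auto
      have "{\<omega>'\<in>space P. (U t \<omega>', Gr t j \<omega>) \<in> {(u, v). 1 - v < u}}
          = space P - {\<omega>'\<in>space P. U t \<omega>' \<le> 1 - Gr t j \<omega>}" by auto
      moreover have "prob (space P - {\<omega>'\<in>space P. U t \<omega>' \<le> 1 - Gr t j \<omega>}) = Gr t j \<omega>"
        using Um g01 by (subst prob_compl) (auto simp: margU[OF t])
      ultimately show "emeasure P {\<omega>'\<in>space P. (U t \<omega>', Gr t j \<omega>) \<in> {(u, v). 1 - v < u}} = ennreal (Gr t j \<omega>)"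
        by (simp add: emeasure_eq_measure)
    qed
  qed
  also have "\<dots> = (\<integral>\<^sup>+x. ennreal x \<partial>distr P borel (Gr t j))"
    by (rule nn_integral_distr[symmetric, OF Grm]) simp
  also have "\<dots> = (\<integral>\<^sup>+x. ennreal (indicator I x / c) * ennreal x \<partial>distr P borel G)"
    unfolding distr_Gr[OF t j] I_def c_def by (rule nn_integral_density) (simp_all)
  also have "\<dots> = (\<integral>\<^sup>+\<omega>. ennreal (indicator I (G \<omega>) / c) * ennreal (G \<omega>) \<partial>P)"
    by (rule nn_integral_distr[OF G_rv]) (unfold I_def, measurable)
  also have "\<dots> = (\<integral>\<^sup>+\<omega>. ennreal (G \<omega> * indicator I (G \<omega>) / c) \<partial>P)"
  proof (rule nn_integral_cong)
    fix \<omega>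
    show "ennreal (indicator I (G \<omega>) / c) * ennreal (G \<omega>) = ennreal (G \<omega> * indicator I (G \<omega>) / c)"
    proof (cases "G \<omega> \<in> I")
      case True
      then have "0 \<le> G \<omega>" using I01 by auto
      then show ?thesis using True c by (simp add: ennreal_mult''[symmetric] mult.commute)
    next
      case False
      then show ?thesis by simp
    qed
  qed
  also have "\<dots> = ennreal (\<integral>\<omega>. G \<omega> * indicator I (G \<omega>) / c \<partial>P)"
  proof (rule nn_integral_eq_integral)
    show "integrable P (\<lambda>\<omega>. G \<omega> * indicator I (G \<omega>) / c)"
    proof (rule integrable_const_bound[where B="1 / c"])
      show "AE x in P. norm (G x * indicator I (G x) / c) \<le> 1 / c"
        using I01 c by (auto simp: indicator_def divide_right_mono)
      show "(\<lambda>\<omega>. G \<omega> * indicator I (G \<omega>) / c) \<in> borel_measurable P"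
        using G_rv unfolding I_def by measurable
    qed
    show "AE x in P. 0 \<le> G x * indicator I (G x) / c"
      using I01 c by (auto simp: indicator_def)
  qed
  finally have "ennreal (measure P S) = ennreal (\<integral>\<omega>. G \<omega> * indicator I (G \<omega>) / c \<partial>P)"
    by (simp add: emeasure_eq_measure)
  moreover have "0 \<le> (\<integral>\<omega>. G \<omega> * indicator I (G \<omega>) / c \<partial>P)"
    using I01 c by (intro integral_nonneg_AE) (auto simp: indicator_def)
  ultimately have "measure P S = (\<integral>\<omega>. G \<omega> * indicator I (G \<omega>) / c \<partial>P)"
    by (simp add: measure_nonneg)
  then show ?thesis using e1 cg unfolding I_def by simp
qed

end

theorem lemma3p1:
  fixes P :: "'a measure"
    and L M :: "nat \<Rightarrow> 'a \<Rightarrow> real"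
    and F :: "nat \<Rightarrow> real \<Rightarrow> (nat \<Rightarrow> real) \<Rightarrow> real"
    and g :: "real \<Rightarrow> real"
    and G :: "'a \<Rightarrow> real"
    and Gr :: "nat \<Rightarrow> nat \<Rightarrow> 'a \<Rightarrow> real"
    and \<alpha> :: "nat \<Rightarrow> real"
    and n m :: nat
  assumes P: "prob_space P"
    and n: "n \<ge> 1"
    and L_rv: "\<And>t. t \<in> {1..n} \<Longrightarrow> L t \<in> borel_measurable P"
    and M_rv: "\<And>t. t \<in> {1..n} \<Longrightarrow> M t \<in> borel_measurable P"
    and F_cond: "\<And>t. t \<in> {1..n} \<Longrightarrow> cond_cdf P M t (F t)"
    and F_cont: "\<And>t y. t \<in> {1..n} \<Longrightarrow> continuous_on UNIV (\<lambda>x. F t x y)"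
    and g: "left_cont_distortion g"
    and G_rv: "G \<in> borel_measurable P"
    and G_range: "\<And>\<omega>. \<omega> \<in> space P \<Longrightarrow> G \<omega> \<in> {0..1}"
    and G_law: "\<And>u. u \<in> {0..1} \<Longrightarrow> measure P {\<omega>\<in>space P. G \<omega> < u} = g u"
    and G_indep: "prob_space.indep_set P (sets (vimage_algebra (space P) G borel))
        (sets (vimage_algebra (space P) (\<lambda>\<omega>. \<lambda>i\<in>{1..n}. (L i \<omega>, M i \<omega>))
                                (PiM {1..n} (\<lambda>_. borel \<Otimes>\<^sub>M borel))))"
    and \<alpha>0: "\<alpha> 0 = 0" and \<alpha>1: "\<alpha> (m + 1) = 1"
    and \<alpha>_mono: "strict_mono_on {0..m+1} \<alpha>"
    and g_jump: "\<And>j. j \<in> {1..m+1} \<Longrightarrow> g (\<alpha> j) - g (\<alpha> (j - 1)) \<noteq> 0"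
    and Gr_rv: "\<And>t j. t \<in> {1..n} \<Longrightarrow> j \<in> {1..m+1} \<Longrightarrow> Gr t j \<in> borel_measurable P"
    and Gr_law: "\<And>t j A. t \<in> {1..n} \<Longrightarrow> j \<in> {1..m+1} \<Longrightarrow> A \<in> sets borel \<Longrightarrow>
        measure P {\<omega>\<in>space P. Gr t j \<omega> \<in> A}
        = measure P {\<omega>\<in>space P. G \<omega> \<in> A \<inter> {\<alpha> (j - 1)..<\<alpha> j}}
          / measure P {\<omega>\<in>space P. G \<omega> \<in> {\<alpha> (j - 1)..<\<alpha> j}}"
    and Gr_indep: "prob_space.indep_sets P
        (\<lambda>k. case k of
               None \<Rightarrow> sets (vimage_algebra (space P) (\<lambda>\<omega>. \<lambda>i\<in>{1..n}. (L i \<omega>, M i \<omega>))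
                                (PiM {1..n} (\<lambda>_. borel \<Otimes>\<^sub>M borel)))
             | Some (t, j) \<Rightarrow> sets (vimage_algebra (space P) (Gr t j) borel))
        (insert None (Some ` ({1..n} \<times> {1..m+1})))"
    and same_law: "distr P (PiM {1..n} (\<lambda>_. borel)) (\<lambda>\<omega>. \<lambda>i\<in>{1..n}. M i \<omega>)
                 = distr P (PiM {1..n} (\<lambda>_. borel)) (\<lambda>\<omega>. \<lambda>i\<in>{1..n}. L i \<omega>)"
  shows "(\<forall>t\<in>{1..n}. \<forall>j\<in>{1..m+1}.
            (\<integral>\<omega>. exc_ind F L Gr t j \<omega> \<partial>P)
            = (\<integral>\<omega>. G \<omega> * indicator {\<alpha> (j - 1)..<\<alpha> j} (G \<omega>) \<partial>P) / (g (\<alpha> j) - g (\<alpha> (j - 1))))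
         \<and> prob_space.indep_vars P (\<lambda>_. PiM {1..m+1} (\<lambda>_. borel))
             (\<lambda>t \<omega>. \<lambda>j\<in>{1..m+1}. exc_ind F L Gr t j \<omega>) {1..n}"
  proof -
  interpret setting3 P L M F n Gr m G g \<alpha>
    unfolding setting3_def setting2_def setting_def setting2_axioms_def setting3_axioms_def
    using P L_rv M_rv F_cond F_cont same_law Gr_rv Gr_indep G_rv G_law \<alpha>0 \<alpha>1 \<alpha>_mono g_jump Gr_law
    by blast
  have e: "Exc = (\<lambda>t \<omega>. \<lambda>j\<in>{1..m+1}. exc_ind F L Gr t j \<omega>)" by (auto simp: fun_eq_iff Exc_def)
  show ?thesis using expect Exc_indep[OF n] unfolding e by blast
qed

end
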